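(* (a) If $K$ is a symmetric real compact nc convex set, then the restriction map $\rho:A(K)\to A(K_1)$, $\rho(f)=f|_{K_1}$, is an isometric unital order isomorphism onto $A(K_1)$. (b) If $K$ is any real compact nc convex set, then the restriction map $\rho_2:A(K)\to A(K_2,M_2(\mathbb{R}))$, $\rho_2(f)=f|_{K_2}$, is a contractive selfadjoint unital order embedding (i.e. $f\ge0$ iff $f(k)\ge0$ for all $k\in K_2$), and $\|f\|\le2\,\|f|_{K_2}\|$ for all $f\in A(K)$.
   Context: A real compact nc convex set over a real dual operator space $E$ is a graded set $K=\bigsqcup_nK_n$, $K_n\subseteq M_n(E)$ weak$^*$ compact, closed under direct sums $\sum\alpha_ix_i\alpha_i^{\mathsf T}$ and compressions $\beta^{\mathsf T}x\beta$ by real isometries. $K$ is symmetric if $k^{\mathsf T}=k$ (i.e. $k_{ji}=k_{ij}$) for every $k=[k_{ij}]\in K_n$ and every $n$. $A(K)$ is the real operator system of continuous nc affine maps $K\to\bigsqcup_nM_n(\mathbb{R})$ (graded, preserving direct sums and compressions, weak$^*$ continuous on each level), with $f^*(k)=f(k)^{\mathsf T}$, cones $M_n(A(K))^+=\{[f_{ij}]:[f_{ij}(k)]\ge0\ \forall k\}$, unit $1$, and norm $\|f\|=\sup_k\|f(k)\|$. $A(K_1)$ is the (classical) space of continuous affine real-valued functions on the compact convex set $K_1$ with sup norm and pointwise order; $A(K_2,M_2(\mathbb{R}))$ is the space of continuous affine maps $K_2\to M_2(\mathbb{R})$ with sup norm and pointwise order. *)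

theory Defs
  imports "HOL-Analysis.Analysis"
begin

text \<open>
The real dual operator space E is the dual of a real normed space F
(type 'f); its elements are bounded linear functionals 'f \<Rightarrow>L real and its
weak* topology is the topology of pointwise convergence on F.  Only the linear
and weak* structure of E enter the statement.  Matrices (over E or over the
reals) are functions nat \<Rightarrow> nat \<Rightarrow> _ ; an n x m matrix is one vanishing
outside the index block {..<n} x {..<m}.  An nc convex set is a family
K :: nat \<Rightarrow> _ set of which only the levels n \<ge> 1 are relevant.
\<close>

type_synonym 'f emat = "nat \<Rightarrow> nat \<Rightarrow> ('f \<Rightarrow>\<^sub>L real)"
type_synonym rmat = "nat \<Rightarrow> nat \<Rightarrow> real"

definition is_mat :: "nat \<Rightarrow> nat \<Rightarrow> (nat \<Rightarrow> nat \<Rightarrow> 'a::zero) \<Rightarrow> bool" where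
  "is_mat n m A \<longleftrightarrow> (\<forall>i j. (n \<le> i \<or> m \<le> j) \<longrightarrow> A i j = 0)"

definition mtr :: "(nat \<Rightarrow> nat \<Rightarrow> 'a) \<Rightarrow> (nat \<Rightarrow> nat \<Rightarrow> 'a)" where
  "mtr A = (\<lambda>i j. A j i)"

definition conj :: "rmat \<Rightarrow> nat \<Rightarrow> (nat \<Rightarrow> nat \<Rightarrow> 'a::real_vector) \<Rightarrow> (nat \<Rightarrow> nat \<Rightarrow> 'a)" where
  "conj \<alpha> m x = (\<lambda>a b. \<Sum>k<m. \<Sum>l<m. (\<alpha> a k * \<alpha> b l) *\<^sub>R x k l)"

definition isom :: "nat \<Rightarrow> nat \<Rightarrow> rmat \<Rightarrow> bool" where
  "isom n m \<alpha> \<longleftrightarrow> is_mat n m \<alpha> \<and>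
     (\<forall>j<m. \<forall>j'<m. (\<Sum>i<n. \<alpha> i j * \<alpha> i j') = (if j = j' then 1 else 0))"

text \<open>admissible data for a direct sum  sum_i alpha_i x_i alpha_i^T  at level n\<close>
definition dsum_data :: "nat \<Rightarrow> nat set \<Rightarrow> (nat \<Rightarrow> nat) \<Rightarrow> (nat \<Rightarrow> rmat) \<Rightarrow> bool" where
  "dsum_data n I d \<alpha> \<longleftrightarrow> 1 \<le> n \<and> finite I \<and> (\<forall>i\<in>I. 1 \<le> d i \<and> isom n (d i) (\<alpha> i)) \<and>
     (\<forall>a<n. \<forall>b<n. (\<Sum>i\<in>I. \<Sum>c<d i. \<alpha> i a c * \<alpha> i b c) = (if a = b then 1 else 0))"

definition dsum :: "nat set \<Rightarrow> (nat \<Rightarrow> nat) \<Rightarrow> (nat \<Rightarrow> rmat) \<Rightarrow> (nat \<Rightarrow> nat \<Rightarrow> nat \<Rightarrow> 'a::real_vector)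
     \<Rightarrow> (nat \<Rightarrow> nat \<Rightarrow> 'a)" where
  "dsum I d \<alpha> x = (\<lambda>a b. \<Sum>i\<in>I. conj (\<alpha> i) (d i) (x i) a b)"

definition wev :: "'f::real_normed_vector emat \<Rightarrow> (nat \<times> nat \<times> 'f \<Rightarrow> real)" where
  "wev x = (\<lambda>(i, j, v). blinfun_apply (x i j) v)"

definition wtop :: "'f::real_normed_vector emat topology" where
  "wtop = pullback_topology UNIV wev euclidean"

definition nc_convex :: "(nat \<Rightarrow> 'f::real_normed_vector emat set) \<Rightarrow> bool" where
  "nc_convex K \<longleftrightarrow>
     (\<forall>n\<ge>1. \<forall>x\<in>K n. is_mat n n x) \<and>
     (\<forall>n I d \<alpha> x. dsum_data n I d \<alpha> \<and> (\<forall>i\<in>I. x i \<in> K (d i)) \<longrightarrow> dsum I d \<alpha> x \<in> K n) \<and>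
     (\<forall>n m \<beta> x. 1 \<le> n \<and> 1 \<le> m \<and> isom n m \<beta> \<and> x \<in> K n \<longrightarrow> conj (mtr \<beta>) n x \<in> K m)"

definition compact_nc_convex :: "(nat \<Rightarrow> 'f::real_normed_vector emat set) \<Rightarrow> bool" where
  "compact_nc_convex K \<longleftrightarrow> nc_convex K \<and> (\<forall>n\<ge>1. compactin wtop (K n))"

definition nc_symmetric :: "(nat \<Rightarrow> 'f::real_normed_vector emat set) \<Rightarrow> bool" where
  "nc_symmetric K \<longleftrightarrow> (\<forall>n\<ge>1. \<forall>k\<in>K n. mtr k = k)"

text \<open>A(K): continuous nc affine maps, represented extensionally (zero off K).\<close>
definition ncA :: "(nat \<Rightarrow> 'f::real_normed_vector emat set) \<Rightarrow> (nat \<Rightarrow> 'f emat \<Rightarrow> rmat) set" where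
  "ncA K = {f.
     (\<forall>n x. \<not> (1 \<le> n \<and> x \<in> K n) \<longrightarrow> f n x = (\<lambda>i j. 0)) \<and>
     (\<forall>n\<ge>1. \<forall>x\<in>K n. is_mat n n (f n x)) \<and>
     (\<forall>n I d \<alpha> x. dsum_data n I d \<alpha> \<and> (\<forall>i\<in>I. x i \<in> K (d i)) \<longrightarrow>
         f n (dsum I d \<alpha> x) = dsum I d \<alpha> (\<lambda>i. f (d i) (x i))) \<and>
     (\<forall>n m \<beta> x. 1 \<le> n \<and> 1 \<le> m \<and> isom n m \<beta> \<and> x \<in> K n \<longrightarrow>
         f m (conj (mtr \<beta>) n x) = conj (mtr \<beta>) n (f n x)) \<and>
     (\<forall>n\<ge>1. continuous_map (subtopology wtop (K n)) euclidean (f n))}"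

definition psd :: "nat \<Rightarrow> rmat \<Rightarrow> bool" where
  "psd n A \<longleftrightarrow> (\<forall>i<n. \<forall>j<n. A i j = A j i) \<and>
     (\<forall>v::nat \<Rightarrow> real. 0 \<le> (\<Sum>i<n. \<Sum>j<n. v i * A i j * v j))"

definition mnorm :: "nat \<Rightarrow> rmat \<Rightarrow> real" where
  "mnorm n A = Sup (insert 0 {sqrt (\<Sum>i<n. (\<Sum>j<n. A i j * v j)\<^sup>2) | v. (\<Sum>j<n. (v j)\<^sup>2) \<le> 1})"

definition ncpos :: "(nat \<Rightarrow> 'f::real_normed_vector emat set) \<Rightarrow> (nat \<Rightarrow> 'f emat \<Rightarrow> rmat) \<Rightarrow> bool" where
  "ncpos K f \<longleftrightarrow> (\<forall>n\<ge>1. \<forall>x\<in>K n. psd n (f n x))"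

definition ncnorm :: "(nat \<Rightarrow> 'f::real_normed_vector emat set) \<Rightarrow> (nat \<Rightarrow> 'f emat \<Rightarrow> rmat) \<Rightarrow> real" where
  "ncnorm K f = Sup (insert 0 {mnorm n (f n x) | n x. 1 \<le> n \<and> x \<in> K n})"

definition ncunit :: "(nat \<Rightarrow> 'f::real_normed_vector emat set) \<Rightarrow> (nat \<Rightarrow> 'f emat \<Rightarrow> rmat)" where
  "ncunit K = (\<lambda>n x. if 1 \<le> n \<and> x \<in> K n then (\<lambda>i j. if i = j \<and> i < n then 1 else 0) else (\<lambda>i j. 0))"

definition ncadj :: "(nat \<Rightarrow> 'f emat \<Rightarrow> rmat) \<Rightarrow> (nat \<Rightarrow> 'f emat \<Rightarrow> rmat)" where
  "ncadj f = (\<lambda>n x. mtr (f n x))"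

definition ccomb :: "real \<Rightarrow> (nat \<Rightarrow> nat \<Rightarrow> 'a::real_vector) \<Rightarrow> (nat \<Rightarrow> nat \<Rightarrow> 'a) \<Rightarrow> (nat \<Rightarrow> nat \<Rightarrow> 'a)" where
  "ccomb t x y = (\<lambda>i j. t *\<^sub>R x i j + (1 - t) *\<^sub>R y i j)"

text \<open>A(K_1): continuous affine real functions on K_1 (elements of K_1 are 1x1 matrices over E)\<close>
definition A1 :: "(nat \<Rightarrow> 'f::real_normed_vector emat set) \<Rightarrow> ('f emat \<Rightarrow> real) set" where
  "A1 K = {g. (\<forall>x. x \<notin> K 1 \<longrightarrow> g x = 0) \<and>
     continuous_map (subtopology wtop (K 1)) euclidean g \<and>
     (\<forall>x\<in>K 1. \<forall>y\<in>K 1. \<forall>t\<in>{0..1}. g (ccomb t x y) = t * g x + (1 - t) * g y)}"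

definition norm1 :: "(nat \<Rightarrow> 'f::real_normed_vector emat set) \<Rightarrow> ('f emat \<Rightarrow> real) \<Rightarrow> real" where
  "norm1 K g = Sup (insert 0 {\<bar>g x\<bar> | x. x \<in> K 1})"

definition A2 :: "(nat \<Rightarrow> 'f::real_normed_vector emat set) \<Rightarrow> ('f emat \<Rightarrow> rmat) set" where
  "A2 K = {h. (\<forall>x. x \<notin> K 2 \<longrightarrow> h x = (\<lambda>i j. 0)) \<and>
     (\<forall>x\<in>K 2. is_mat 2 2 (h x)) \<and>
     continuous_map (subtopology wtop (K 2)) euclidean h \<and>
     (\<forall>x\<in>K 2. \<forall>y\<in>K 2. \<forall>t\<in>{0..1}. h (ccomb t x y) = ccomb t (h x) (h y))}"

definition norm2 :: "(nat \<Rightarrow> 'f::real_normed_vector emat set) \<Rightarrow> ('f emat \<Rightarrow> rmat) \<Rightarrow> real" where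
  "norm2 K h = Sup (insert 0 {mnorm 2 (h x) | x. x \<in> K 2})"

definition rho :: "(nat \<Rightarrow> 'f::real_normed_vector emat set) \<Rightarrow> (nat \<Rightarrow> 'f emat \<Rightarrow> rmat) \<Rightarrow> ('f emat \<Rightarrow> real)" where
  "rho K f = (\<lambda>x. if x \<in> K 1 then f 1 x 0 0 else 0)"

definition rho2 :: "(nat \<Rightarrow> 'f::real_normed_vector emat set) \<Rightarrow> (nat \<Rightarrow> 'f emat \<Rightarrow> rmat) \<Rightarrow> ('f emat \<Rightarrow> rmat)" where
  "rho2 K f = (\<lambda>x. if x \<in> K 2 then f 2 x else (\<lambda>i j. 0))"

end

theory Submission
  imports Defs
begin

definition mmul :: "nat \<Rightarrow> rmat \<Rightarrow> rmat \<Rightarrow> rmat" where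
  "mmul M g a = (\<lambda>i p. \<Sum>k<M. g i k * a k p)"

lemma swap4:
  fixes F :: "nat \<Rightarrow> nat \<Rightarrow> nat \<Rightarrow> nat \<Rightarrow> 'a::comm_monoid_add"
  shows "(\<Sum>k\<in>A. \<Sum>l\<in>B. \<Sum>p\<in>C. \<Sum>q\<in>D. F k l p q) = (\<Sum>p\<in>C. \<Sum>q\<in>D. \<Sum>k\<in>A. \<Sum>l\<in>B. F k l p q)"
proof -
  have "(\<Sum>k\<in>A. \<Sum>l\<in>B. \<Sum>p\<in>C. \<Sum>q\<in>D. F k l p q) = (\<Sum>k\<in>A. \<Sum>p\<in>C. \<Sum>q\<in>D. \<Sum>l\<in>B. F k l p q)"
  proof (rule sum.cong[OF refl])
    fix k
    have "(\<Sum>l\<in>B. \<Sum>p\<in>C. \<Sum>q\<in>D. F k l p q) = (\<Sum>p\<in>C. \<Sum>l\<in>B. \<Sum>q\<in>D. F k l p q)"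
      by (rule sum.swap)
    also have "\<dots> = (\<Sum>p\<in>C. \<Sum>q\<in>D. \<Sum>l\<in>B. F k l p q)"
      by (rule sum.cong[OF refl], rule sum.swap)
    finally show "(\<Sum>l\<in>B. \<Sum>p\<in>C. \<Sum>q\<in>D. F k l p q) = (\<Sum>p\<in>C. \<Sum>q\<in>D. \<Sum>l\<in>B. F k l p q)" .
  qed
  also have "\<dots> = (\<Sum>p\<in>C. \<Sum>k\<in>A. \<Sum>q\<in>D. \<Sum>l\<in>B. F k l p q)"
    by (rule sum.swap)
  also have "\<dots> = (\<Sum>p\<in>C. \<Sum>q\<in>D. \<Sum>k\<in>A. \<Sum>l\<in>B. F k l p q)"
    by (rule sum.cong[OF refl], rule sum.swap)
  finally show ?thesis .
qed

lemma conj_comp: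
  fixes x :: "nat \<Rightarrow> nat \<Rightarrow> 'a::real_vector"
  shows "conj g M (conj a n x) = conj (mmul M g a) n x"
proof (rule ext, rule ext)
  fix i j
  have "conj g M (conj a n x) i j =
     (\<Sum>k<M. \<Sum>l<M. \<Sum>p<n. \<Sum>q<n. (g i k * g j l * (a k p * a l q)) *\<^sub>R x p q)"
    by (simp add: conj_def scaleR_sum_right mult.assoc)
  also have "\<dots> = (\<Sum>p<n. \<Sum>q<n. \<Sum>k<M. \<Sum>l<M. (g i k * g j l * (a k p * a l q)) *\<^sub>R x p q)"
    by (rule swap4)
  also have "\<dots> = conj (mmul M g a) n x i j"
    unfolding conj_def mmul_def
    by (simp add: scaleR_sum_left sum_product algebra_simps)
  finally show "conj g M (conj a n x) i j = conj (mmul M g a) n x i j" .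
qed


lemma sum_delta1:
  fixes G :: "nat \<Rightarrow> 'a::comm_monoid_add"
  shows "(\<Sum>l<m. if l = b \<and> Q then G l else 0) = (if b < m \<and> Q then G b else 0)"
  by (cases Q) auto

lemma sum_delta2:
  fixes F :: "nat \<Rightarrow> nat \<Rightarrow> 'a::comm_monoid_add"
  shows "(\<Sum>k<n. \<Sum>l<m. if k = a \<and> l = b \<and> P then F k l else 0) = (if a < n \<and> b < m \<and> P then F a b else 0)"
proof -
  have "(\<Sum>k<n. \<Sum>l<m. if k = a \<and> l = b \<and> P then F k l else 0) = (\<Sum>k<n. if k = a \<and> (b < m \<and> P) then F k b else 0)"
    by (intro sum.cong refl) (auto simp: sum_delta1[where Q="_ \<and> P", simplified])
  also have "\<dots> = (if a < n \<and> b < m \<and> P then F a b else 0)" by (subst sum_delta1) auto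
  finally show ?thesis .
qed

lemma conj_add:
  fixes x y :: "nat \<Rightarrow> nat \<Rightarrow> 'a::real_vector"
  shows "conj g M (\<lambda>i j. x i j + y i j) = (\<lambda>i j. conj g M x i j + conj g M y i j)"
  by (simp add: conj_def scaleR_add_right sum.distrib)

lemma conj_scale:
  fixes x :: "nat \<Rightarrow> nat \<Rightarrow> 'a::real_vector"
  shows "conj g M (\<lambda>i j. c *\<^sub>R x i j) = (\<lambda>i j. c *\<^sub>R conj g M x i j)"
  by (simp add: conj_def scaleR_sum_right mult.commute)

lemma mtr_conj: "mtr (conj g M x) = conj g M (mtr x)"
  unfolding mtr_def conj_def by (rule ext, rule ext, subst sum.swap, simp add: mult.commute)

lemma conj_is_mat:
  assumes "is_mat m M g"
  shows "is_mat m m (conj g M x)"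
  using assms unfolding is_mat_def conj_def by auto

definition sdiag :: "nat \<Rightarrow> real \<Rightarrow> rmat" where
  "sdiag n c = (\<lambda>a p. if a = p \<and> p < n then c else 0)"

lemma conj_sdiag:
  fixes x :: "nat \<Rightarrow> nat \<Rightarrow> 'a::real_vector"
  shows "conj (sdiag n c) n x = (\<lambda>a b. if a < n \<and> b < n then (c*c) *\<^sub>R x a b else 0)"
proof (rule ext, rule ext)
  fix a b
  have "conj (sdiag n c) n x a b = (\<Sum>k<n. \<Sum>l<n. (if k = a \<and> l = b \<and> a < n \<and> b < n then (c*c) *\<^sub>R x k l else 0))"
    unfolding conj_def sdiag_def by (intro sum.cong refl) auto
  also have "\<dots> = (if a < n \<and> b < n then (c*c) *\<^sub>R x a b else 0)"
    by (subst sum_delta2) auto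
  finally show "conj (sdiag n c) n x a b = (if a < n \<and> b < n then (c*c) *\<^sub>R x a b else 0)" .
qed

definition ablk :: "nat \<Rightarrow> nat \<Rightarrow> rmat" where
  "ablk n i = (\<lambda>a k. if k < n \<and> a = k + i*n then 1 else 0)"

lemma sum_ablk:
  "(\<Sum>c<n. ablk n i a c * ablk n i b c) = (if a = b \<and> i*n \<le> a \<and> a < i*n + n then 1 else 0)"
proof -
  have "(\<Sum>c<n. ablk n i a c * ablk n i b c) = (\<Sum>c<n. if c = a - i*n \<and> a = b \<and> i*n \<le> a then 1 else 0)"
    unfolding ablk_def by (intro sum.cong refl) auto
  also have "\<dots> = (if a = b \<and> i*n \<le> a \<and> a < i*n + n then 1 else 0)"
    by (auto simp: sum.If_cases)
  finally show ?thesis .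
qed

lemma ablk_isom: "i \<le> 1 \<Longrightarrow> isom (2*n) n (ablk n i)"
proof -
  assume i: "i \<le> 1"
  have m: "is_mat (2*n) n (ablk n i)" using i unfolding is_mat_def ablk_def
    by (auto, (cases i; simp)+)
  have "(\<Sum>a<2*n. ablk n i a j * ablk n i a j') = (if j = j' then 1 else 0)" if "j < n" "j' < n" for j j'
  proof -
    have "(\<Sum>a<2*n. ablk n i a j * ablk n i a j') = (\<Sum>a<2*n. if a = j + i*n \<and> j = j' then 1 else 0)"
      unfolding ablk_def using that by (intro sum.cong refl) auto
    also have "\<dots> = (if j = j' then 1 else 0)"
      using i that by (cases i) (auto simp: sum.If_cases)
    finally show ?thesis .
  qed
  then show ?thesis using m unfolding isom_def by auto
qed

lemma ablk_data: "1 \<le> n \<Longrightarrow> dsum_data (2*n) {0,1} (\<lambda>_. n) (ablk n)"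
  unfolding dsum_data_def using ablk_isom by (auto simp: sum_ablk)

lemma conj_ablk:
  fixes x :: "nat \<Rightarrow> nat \<Rightarrow> 'a::real_vector"
  shows "conj (ablk n i) n x a b =
    (if i*n \<le> a \<and> a < i*n+n \<and> i*n \<le> b \<and> b < i*n+n then x (a - i*n) (b - i*n) else 0)"
proof -
  have "conj (ablk n i) n x a b = (\<Sum>k<n. \<Sum>l<n. if k = a - i*n \<and> l = b - i*n \<and> i*n \<le> a \<and> a < i*n+n \<and> i*n \<le> b \<and> b < i*n+n then x k l else 0)"
    unfolding conj_def ablk_def by (intro sum.cong refl) auto
  also have "\<dots> = (if i*n \<le> a \<and> a < i*n+n \<and> i*n \<le> b \<and> b < i*n+n then x (a - i*n) (b - i*n) else 0)"
    by (subst sum_delta2) auto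
  finally show ?thesis .
qed


lemma Kmat: "nc_convex K \<Longrightarrow> 1 \<le> n \<Longrightarrow> x \<in> K n \<Longrightarrow> is_mat n n x"
  unfolding nc_convex_def by blast
lemma Kcomp: "nc_convex K \<Longrightarrow> 1 \<le> n \<Longrightarrow> 1 \<le> m \<Longrightarrow> isom n m \<beta> \<Longrightarrow> x \<in> K n \<Longrightarrow> conj (mtr \<beta>) n x \<in> K m"
  unfolding nc_convex_def by blast
lemma Kdsum: "nc_convex K \<Longrightarrow> dsum_data n I d \<alpha> \<Longrightarrow> (\<And>i. i \<in> I \<Longrightarrow> x i \<in> K (d i)) \<Longrightarrow> dsum I d \<alpha> x \<in> K n"
  unfolding nc_convex_def by blast

lemma fA_off: "f \<in> ncA K \<Longrightarrow> \<not> (1 \<le> n \<and> x \<in> K n) \<Longrightarrow> f n x = (\<lambda>i j. 0)"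
  unfolding ncA_def by blast
lemma fA_mat: "f \<in> ncA K \<Longrightarrow> 1 \<le> n \<Longrightarrow> x \<in> K n \<Longrightarrow> is_mat n n (f n x)"
  unfolding ncA_def by blast
lemma fA_comp: "f \<in> ncA K \<Longrightarrow> 1 \<le> n \<Longrightarrow> 1 \<le> m \<Longrightarrow> isom n m \<beta> \<Longrightarrow> x \<in> K n \<Longrightarrow>
   f m (conj (mtr \<beta>) n x) = conj (mtr \<beta>) n (f n x)"
  unfolding ncA_def by blast
lemma fA_dsum: "f \<in> ncA K \<Longrightarrow> dsum_data n I d \<alpha> \<Longrightarrow> (\<And>i. i \<in> I \<Longrightarrow> x i \<in> K (d i)) \<Longrightarrow>
   f n (dsum I d \<alpha> x) = dsum I d \<alpha> (\<lambda>i. f (d i) (x i))"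
  unfolding ncA_def by blast
lemma fA_cont: "f \<in> ncA K \<Longrightarrow> 1 \<le> n \<Longrightarrow> continuous_map (subtopology wtop (K n)) euclidean (f n)"
  unfolding ncA_def by blast

definition blk :: "nat \<Rightarrow> (nat \<Rightarrow> nat \<Rightarrow> 'a::real_vector) \<Rightarrow> (nat \<Rightarrow> nat \<Rightarrow> 'a) \<Rightarrow> (nat \<Rightarrow> nat \<Rightarrow> 'a)" where
  "blk n x y = dsum {0,1} (\<lambda>_. n) (ablk n) (\<lambda>i. if i = 0 then x else y)"

lemma blk_eq: "blk n x y = (\<lambda>a b. conj (ablk n 0) n x a b + conj (ablk n 1) n y a b)"
  unfolding blk_def dsum_def by simp

lemma blk_entry: "blk n x y a b =
   (if a < n \<and> b < n then x a b else 0) + (if n \<le> a \<and> a < n+n \<and> n \<le> b \<and> b < n+n then y (a-n) (b-n) else 0)"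
  unfolding blk_eq conj_ablk by simp

lemma Kblk: "nc_convex K \<Longrightarrow> 1 \<le> n \<Longrightarrow> x \<in> K n \<Longrightarrow> y \<in> K n \<Longrightarrow> blk n x y \<in> K (2*n)"
  unfolding blk_def by (rule Kdsum, assumption, rule ablk_data, auto)

lemma fblk: "f \<in> ncA K \<Longrightarrow> 1 \<le> n \<Longrightarrow> x \<in> K n \<Longrightarrow> y \<in> K n \<Longrightarrow> f (2*n) (blk n x y) = blk n (f n x) (f n y)"
  unfolding blk_def
  apply (subst fA_dsum[OF _ ablk_data], assumption+)
   apply auto[1]
  apply (rule arg_cong[where f="dsum _ _ _"]) by auto

definition bc :: "nat \<Rightarrow> real \<Rightarrow> rmat" where
  "bc n t = (\<lambda>k a. (if a < n \<and> k = a then sqrt t else 0) + (if a < n \<and> k = a + n then sqrt (1-t) else 0))"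

lemma bc_isom: assumes "0 \<le> t" "t \<le> 1" shows "isom (2*n) n (bc n t)"
proof -
  have m: "is_mat (2*n) n (bc n t)" unfolding is_mat_def bc_def by auto
  have "(\<Sum>a<2*n. bc n t a j * bc n t a j') = (if j = j' then 1 else 0)" if "j < n" "j' < n" for j j'
  proof -
    have "(\<Sum>a<2*n. bc n t a j * bc n t a j') =
       (\<Sum>a<2*n. (if a = j \<and> j = j' then t else 0) + (if a = j + n \<and> j = j' then 1 - t else 0))"
      unfolding bc_def using that assms by (intro sum.cong refl) (auto simp: algebra_simps)
    also have "\<dots> = (if j = j' then t + (1 - t) else 0)"
      using that by (simp add: sum.distrib sum_delta1[where Q="j = j'"])
    finally show ?thesis by simp
  qed
  then show ?thesis using m unfolding isom_def by auto
qed

lemma mmul_bc0: "mmul (2*n) (mtr (bc n t)) (ablk n 0) = sdiag n (sqrt t)"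
proof (rule ext, rule ext)
  fix a p
  have "mmul (2*n) (mtr (bc n t)) (ablk n 0) a p = (\<Sum>k<2*n. if k = p \<and> a = p \<and> p < n then sqrt t else 0)"
    unfolding mmul_def mtr_def bc_def ablk_def by (intro sum.cong refl) auto
  also have "\<dots> = sdiag n (sqrt t) a p" unfolding sdiag_def by (subst sum_delta1) auto
  finally show "mmul (2*n) (mtr (bc n t)) (ablk n 0) a p = sdiag n (sqrt t) a p" .
qed

lemma mmul_bc1: "mmul (2*n) (mtr (bc n t)) (ablk n 1) = sdiag n (sqrt (1-t))"
proof (rule ext, rule ext)
  fix a p
  have "mmul (2*n) (mtr (bc n t)) (ablk n 1) a p = (\<Sum>k<2*n. if k = p + n \<and> a = p \<and> p < n then sqrt (1-t) else 0)"
    unfolding mmul_def mtr_def bc_def ablk_def by (intro sum.cong refl) auto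
  also have "\<dots> = sdiag n (sqrt (1-t)) a p" unfolding sdiag_def by (subst sum_delta1) auto
  finally show "mmul (2*n) (mtr (bc n t)) (ablk n 1) a p = sdiag n (sqrt (1-t)) a p" .
qed

lemma conj_bc_blk:
  fixes x y :: "nat \<Rightarrow> nat \<Rightarrow> 'a::real_vector"
  assumes "is_mat n n x" "is_mat n n y" "0 \<le> t" "t \<le> 1"
  shows "conj (mtr (bc n t)) (2*n) (blk n x y) = ccomb t x y"
proof -
  have "conj (mtr (bc n t)) (2*n) (blk n x y) =
     (\<lambda>a b. conj (sdiag n (sqrt t)) n x a b + conj (sdiag n (sqrt (1-t))) n y a b)"
    unfolding blk_eq conj_add conj_comp mmul_bc0 mmul_bc1 by simp
  also have "\<dots> = ccomb t x y"
    unfolding conj_sdiag ccomb_def using assms unfolding is_mat_def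
    by (intro ext) (auto simp: real_sqrt_mult[symmetric])
  finally show ?thesis .
qed

lemma Kccomb: assumes K: "nc_convex K" and n: "1 \<le> n" and xy: "x \<in> K n" "y \<in> K n" and t: "0 \<le> t" "t \<le> 1"
  shows "ccomb t x y \<in> K n"
proof -
  have "conj (mtr (bc n t)) (2*n) (blk n x y) \<in> K n"
    by (rule Kcomp[OF K _ n bc_isom[OF t] Kblk[OF K n xy]]) (use n in auto)
  then show ?thesis using conj_bc_blk[OF Kmat[OF K n xy(1)] Kmat[OF K n xy(2)] t] by simp
qed

lemma fccomb: assumes K: "nc_convex K" and f: "f \<in> ncA K" and n: "1 \<le> n" and xy: "x \<in> K n" "y \<in> K n"
  and t: "0 \<le> t" "t \<le> 1"
  shows "f n (ccomb t x y) = ccomb t (f n x) (f n y)"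
proof -
  have "f n (conj (mtr (bc n t)) (2*n) (blk n x y)) = conj (mtr (bc n t)) (2*n) (f (2*n) (blk n x y))"
    by (rule fA_comp[OF f _ n bc_isom[OF t] Kblk[OF K n xy]]) (use n in auto)
  also have "\<dots> = ccomb t (f n x) (f n y)" unfolding fblk[OF f n xy]
    by (rule conj_bc_blk[OF fA_mat[OF f n xy(1)] fA_mat[OF f n xy(2)] t])
  finally show ?thesis using conj_bc_blk[OF Kmat[OF K n xy(1)] Kmat[OF K n xy(2)] t] by simp
qed


lemma conj2: "conj g 2 z a b = (g a 0 * g b 0) *\<^sub>R z 0 0 + (g a 0 * g b 1) *\<^sub>R z 0 1 + (g a 1 * g b 0) *\<^sub>R z 1 0 + (g a 1 * g b 1) *\<^sub>R z 1 1"
  unfolding conj_def by (simp add: numeral_2_eq_2)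

definition col :: "nat \<Rightarrow> (nat \<Rightarrow> real) \<Rightarrow> rmat" where
  "col n v = (\<lambda>a b. if b = 0 \<and> a < n then v a else 0)"

definition col2 :: "nat \<Rightarrow> (nat \<Rightarrow> real) \<Rightarrow> (nat \<Rightarrow> real) \<Rightarrow> rmat" where
  "col2 n p q = (\<lambda>a b. if a < n \<and> b = 0 then p a else if a < n \<and> b = 1 then q a else 0)"

definition ev :: "nat \<Rightarrow> nat \<Rightarrow> real" where
  "ev i = (\<lambda>k. if k = i then 1 else 0)"

lemma col_isom: "(\<Sum>a<n. v a * v a) = 1 \<Longrightarrow> isom n 1 (col n v)"
  unfolding isom_def is_mat_def col_def by auto

lemma col2_isom: "(\<Sum>a<n. p a * p a) = 1 \<Longrightarrow> (\<Sum>a<n. q a * q a) = 1 \<Longrightarrow> (\<Sum>a<n. p a * q a) = 0 \<Longrightarrow>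
   isom n 2 (col2 n p q)"
  unfolding isom_def is_mat_def col2_def
  by (auto simp: less_2_cases_iff mult.commute)

lemma conj_col: "conj (mtr (col n v)) n x a b =
   (if a = 0 \<and> b = 0 then (\<Sum>k<n. \<Sum>l<n. (v k * v l) *\<^sub>R x k l) else 0)"
  unfolding conj_def mtr_def col_def by auto

lemma conj_col2: "conj (mtr (col2 n p q)) n x a b =
   (if a = 0 \<and> b = 0 then (\<Sum>k<n. \<Sum>l<n. (p k * p l) *\<^sub>R x k l)
    else if a = 0 \<and> b = 1 then (\<Sum>k<n. \<Sum>l<n. (p k * q l) *\<^sub>R x k l)
    else if a = 1 \<and> b = 0 then (\<Sum>k<n. \<Sum>l<n. (q k * p l) *\<^sub>R x k l)
    else if a = 1 \<and> b = 1 then (\<Sum>k<n. \<Sum>l<n. (q k * q l) *\<^sub>R x k l) else 0)"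
  unfolding conj_def mtr_def col2_def by auto

lemma sum_ev: fixes x :: "nat \<Rightarrow> nat \<Rightarrow> 'a::real_vector" shows "i < n \<Longrightarrow> j < n \<Longrightarrow> (\<Sum>k<n. \<Sum>l<n. (ev i k * ev j l) *\<^sub>R x k l) = x i j"
proof -
  assume "i < n" "j < n"
  have "(\<Sum>k<n. \<Sum>l<n. (ev i k * ev j l) *\<^sub>R x k l) = (\<Sum>k<n. \<Sum>l<n. if k = i \<and> l = j \<and> True then x k l else 0)"
    unfolding ev_def by (intro sum.cong refl) auto
  also have "\<dots> = x i j" using \<open>i < n\<close> \<open>j < n\<close> by (subst sum_delta2) auto
  finally show ?thesis .
qed

lemma ev_orth: assumes "i < n" shows "(\<Sum>a<n. ev i a * ev j a) = (if i = j then 1 else 0)"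
proof -
  have "(\<Sum>a<n. ev i a * ev j a) = (\<Sum>a<n. if a = i \<and> i = j then 1 else 0)"
    unfolding ev_def by (intro sum.cong refl) auto
  also have "\<dots> = (if i < n \<and> i = j then 1 else 0)" by (rule sum_delta1)
  finally show ?thesis using assms by simp
qed

definition Rm :: rmat where "Rm = (\<lambda>a b. if a = 1 \<and> b = 0 then -1 else if a = 0 \<and> b = 1 then 1 else 0)"
definition Dm :: rmat where "Dm = (\<lambda>a b. if a = b \<and> a < 2 then (if a = 0 then 1 else -1) else 0)"

lemma Rm_isom: "isom 2 2 Rm"
  unfolding isom_def is_mat_def Rm_def by (auto simp: numeral_2_eq_2 less_Suc_eq)
lemma Dm_isom: "isom 2 2 Dm"
  unfolding isom_def is_mat_def Dm_def by (auto simp: numeral_2_eq_2 less_Suc_eq)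

lemma sym2:
  assumes K: "nc_convex K" and f: "f \<in> ncA K" and y: "y \<in> K 2" and ys: "y 0 1 = y 1 0"
  shows "f 2 y 0 1 = f 2 y 1 0"
proof -
  let ?y' = "conj (mtr Rm) 2 y"
  have y': "?y' \<in> K 2" by (rule Kcomp[OF K _ _ Rm_isom y]) auto
  let ?w = "ccomb (1/2) y ?y'"
  have w: "?w \<in> K 2" by (rule Kccomb[OF K _ y y']) auto
  have ym: "is_mat 2 2 y" by (rule Kmat[OF K _ y]) auto
  have wD: "conj (mtr Dm) 2 ?w = ?w"
  proof (rule ext, rule ext)
    fix a b
    have e1: "?w 0 1 = 0" using ys unfolding ccomb_def by (simp add: conj2 mtr_def Rm_def)
    have e2: "?w 1 0 = 0" using ys unfolding ccomb_def by (simp add: conj2 mtr_def Rm_def)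
    show "conj (mtr Dm) 2 ?w a b = ?w a b"
    proof (cases "a < 2 \<and> b < 2")
      case True
      then show ?thesis using e1 e2 by (auto simp: less_2_cases_iff conj2 mtr_def Dm_def)
    next
      case False
      have "?w a b = 0" using False ym ys unfolding is_mat_def ccomb_def conj_def mtr_def Rm_def by auto
      moreover have "conj (mtr Dm) 2 ?w a b = 0" using False unfolding conj2 mtr_def Dm_def by auto
      ultimately show ?thesis by simp
    qed
  qed
  have eq: "f 2 ?w = conj (mtr Dm) 2 (f 2 ?w)"
    using fA_comp[OF f _ _ Dm_isom w] wD by simp
  have "f 2 ?w 0 1 = conj (mtr Dm) 2 (f 2 ?w) 0 1" using eq by metis
  also have "\<dots> = - f 2 ?w 0 1" by (simp add: conj2 mtr_def Dm_def)
  finally have "f 2 ?w 0 1 = - f 2 ?w 0 1" .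
  then have w0: "f 2 ?w 0 1 = 0" by simp
  have "f 2 ?w = ccomb (1/2) (f 2 y) (conj (mtr Rm) 2 (f 2 y))"
    using fccomb[OF K f _ y y'] fA_comp[OF f _ _ Rm_isom y] by simp
  then have "f 2 ?w 0 1 = (f 2 y 0 1 - f 2 y 1 0) / 2"
    unfolding ccomb_def by (simp add: conj2 mtr_def Rm_def)
  then show ?thesis using w0 by simp
qed


lemma sum_ev_real: "i < n \<Longrightarrow> j < n \<Longrightarrow> (\<Sum>k<n. \<Sum>l<n. ev i k * ev j l * (A::rmat) k l) = A i j"
  using sum_ev[of i n j A] by simp

lemma symn:
  assumes K: "nc_convex K" and S: "nc_symmetric K" and f: "f \<in> ncA K"
  shows "f n x i j = f n x j i"
proof (cases "1 \<le> n \<and> x \<in> K n")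
  case False then show ?thesis using fA_off[OF f False] by simp
next
  case True
  then have n: "1 \<le> n" and x: "x \<in> K n" by auto
  have fm: "is_mat n n (f n x)" by (rule fA_mat[OF f n x])
  show ?thesis
  proof (cases "i < n \<and> j < n \<and> i \<noteq> j")
    case False
    then show ?thesis using fm unfolding is_mat_def by (metis not_less)
  next
    case True
    then have ij: "i < n" "j < n" "i \<noteq> j" by auto
    have b: "isom n 2 (col2 n (ev i) (ev j))"
      using ev_orth[OF ij(1), of i] ev_orth[OF ij(2), of j] ev_orth[OF ij(1), of j] ij(3)
      by (intro col2_isom) auto
    let ?y = "conj (mtr (col2 n (ev i) (ev j))) n x"
    have y: "?y \<in> K 2" by (rule Kcomp[OF K n _ b x]) auto
    have "mtr ?y = ?y" using S y unfolding nc_symmetric_def by (metis one_le_numeral)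
    then have ys: "?y 0 1 = ?y 1 0" unfolding mtr_def by metis
    have "f 2 ?y 0 1 = f 2 ?y 1 0" by (rule sym2[OF K f y ys])
    moreover have "f 2 ?y = conj (mtr (col2 n (ev i) (ev j))) n (f n x)"
      by (rule fA_comp[OF f n _ b x]) auto
    ultimately show ?thesis using ij by (simp add: conj_col2 sum_ev_real)
  qed
qed

subsection \<open>Topology\<close>

lemma cont_rmat_iff:
  "continuous_map X euclidean (h :: 'x \<Rightarrow> rmat) \<longleftrightarrow> (\<forall>i j. continuous_map X euclidean (\<lambda>x. h x i j))"
proof -
  have "continuous_map X euclidean (h :: 'x \<Rightarrow> rmat) \<longleftrightarrow> (\<forall>i. continuous_map X euclidean (\<lambda>x. h x i))"
    by (metis (no_types) continuous_map_componentwise_UNIV euclidean_product_topology)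
  also have "\<dots> \<longleftrightarrow> (\<forall>i j. continuous_map X euclidean (\<lambda>x. h x i j))"
    by (metis (no_types) continuous_map_componentwise_UNIV euclidean_product_topology)
  finally show ?thesis .
qed

lemma topspace_wtop[simp]: "topspace wtop = UNIV"
  unfolding wtop_def topspace_pullback_topology by simp

lemma cont_eval: "continuous_map wtop euclidean (\<lambda>x. blinfun_apply (x k l) v)"
proof -
  have "continuous_map (pullback_topology UNIV wev euclidean) euclidean ((\<lambda>z. z (k, l, v)) \<circ> wev)"
    by (rule continuous_map_pullback)
       (metis (no_types) continuous_map_product_projection euclidean_product_topology UNIV_I)
  then show ?thesis unfolding wtop_def o_def wev_def by simp
qed

lemma cont_into_wtop:
  assumes "\<And>k l v. continuous_map X euclidean (\<lambda>x. blinfun_apply (h x k l) v)"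
  shows "continuous_map X wtop h"
proof -
  have "continuous_map X euclidean (wev \<circ> h)"
  proof -
    have "\<forall>z. continuous_map X euclidean (\<lambda>x. (wev \<circ> h) x z)"
      using assms unfolding wev_def by (auto split: prod.splits)
    then show ?thesis
      by (metis (no_types) continuous_map_componentwise_UNIV euclidean_product_topology)
  qed
  then show ?thesis unfolding wtop_def by (rule continuous_map_pullback') auto
qed

lemma cont_conj: "continuous_map wtop wtop (conj g M)"
proof (rule cont_into_wtop)
  fix k l v
  have e: "(\<lambda>x. blinfun_apply (conj g M x k l) v) = (\<lambda>x. \<Sum>a<M. \<Sum>b<M. (g k a * g l b) * blinfun_apply (x a b) v)"
    unfolding conj_def by (simp add: blinfun.sum_left blinfun.scaleR_left)
  show "continuous_map wtop euclidean (\<lambda>x. blinfun_apply (conj g M x k l) v)"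
    unfolding e by (intro continuous_map_sum finite_lessThan continuous_map_real_mult_left cont_eval)
qed

lemma cont_conj_sub: "(\<And>x. x \<in> S \<Longrightarrow> conj g M x \<in> T) \<Longrightarrow>
   continuous_map (subtopology wtop S) (subtopology wtop T) (conj g M)"
  by (auto simp: continuous_map_in_subtopology intro: continuous_map_from_subtopology cont_conj)

lemma cont_bound:
  assumes c: "compactin wtop S" and h: "continuous_map (subtopology wtop S) euclidean (h :: _ \<Rightarrow> rmat)"
  shows "\<exists>B. \<forall>x\<in>S. \<bar>h x i j\<bar> \<le> B"
proof -
  have hc: "continuous_map (subtopology wtop S) euclidean (\<lambda>x. h x i j)" using h cont_rmat_iff by blast
  have "compactin (subtopology wtop S) S" using c by (simp add: compactin_subtopology)
  then have "compactin euclidean ((\<lambda>x. h x i j) ` S)" using image_compactin hc by blast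
  then have "bounded ((\<lambda>x. h x i j) ` S)" by (simp add: compact_imp_bounded)
  then show ?thesis unfolding bounded_real by auto
qed


definition mvn :: "nat \<Rightarrow> rmat \<Rightarrow> (nat \<Rightarrow> real) \<Rightarrow> real" where
  "mvn n A v = sqrt (\<Sum>i<n. (\<Sum>j<n. A i j * v j)\<^sup>2)"

lemma mnorm_eq: "mnorm n A = Sup (insert 0 {mvn n A v | v. (\<Sum>j<n. (v j)\<^sup>2) \<le> 1})"
  unfolding mnorm_def mvn_def by simp

lemma vcoord_le: fixes v :: "nat \<Rightarrow> real" and n :: nat assumes "(\<Sum>j<n. (v j)\<^sup>2) \<le> (1::real)" "j < n" shows "\<bar>v j\<bar> \<le> 1"
proof -
  have "(v j)\<^sup>2 \<le> (\<Sum>j<n. (v j)\<^sup>2)" using assms(2) by (intro member_le_sum) auto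
  then have "(v j)\<^sup>2 \<le> 1\<^sup>2" using assms(1) by simp
  then show ?thesis using abs_le_square_iff by (metis abs_one)
qed

lemma mvn_bound: assumes "(\<Sum>j<n. (v j)\<^sup>2) \<le> 1"
  shows "mvn n A v \<le> sqrt (real n * (\<Sum>i<n. \<Sum>j<n. \<bar>A i j\<bar>)\<^sup>2)"
proof -
  let ?S = "\<Sum>i<n. \<Sum>j<n. \<bar>A i j\<bar>"
  have "(\<Sum>j<n. A i j * v j)\<^sup>2 \<le> ?S\<^sup>2" if i: "i < n" for i
  proof -
    have "\<bar>\<Sum>j<n. A i j * v j\<bar> \<le> (\<Sum>j<n. \<bar>A i j * v j\<bar>)" by (rule sum_abs)
    also have "\<dots> \<le> (\<Sum>j<n. \<bar>A i j\<bar>)"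
    proof (rule sum_mono)
      fix j assume "j \<in> {..<n}"
      then have "\<bar>v j\<bar> \<le> 1" using vcoord_le[OF assms] by auto
      then show "\<bar>A i j * v j\<bar> \<le> \<bar>A i j\<bar>" by (simp add: abs_mult mult_left_le)
    qed
    also have "\<dots> \<le> ?S"
      using i by (intro member_le_sum[where f="\<lambda>i. \<Sum>j<n. \<bar>A i j\<bar>"]) (auto intro: sum_nonneg)
    finally show ?thesis by (metis abs_ge_zero power2_abs power_mono)
  qed
  then have "(\<Sum>i<n. (\<Sum>j<n. A i j * v j)\<^sup>2) \<le> (\<Sum>i<n. ?S\<^sup>2)" by (intro sum_mono) auto
  then show ?thesis unfolding mvn_def by simp
qed

lemma mnorm_bdd: "bdd_above (insert 0 {mvn n A v | v. (\<Sum>j<n. (v j)\<^sup>2) \<le> 1})"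
  unfolding bdd_above_def
  by (rule exI[of _ "sqrt (real n * (\<Sum>i<n. \<Sum>j<n. \<bar>A i j\<bar>)\<^sup>2)"]) (auto intro: mvn_bound)

lemma mnorm_ge: "(\<Sum>j<n. (v j)\<^sup>2) \<le> 1 \<Longrightarrow> mvn n A v \<le> mnorm n A"
  unfolding mnorm_eq by (rule cSup_upper[OF _ mnorm_bdd]) auto

lemma mnorm_nonneg: "0 \<le> mnorm n A"
  unfolding mnorm_eq by (rule cSup_upper[OF _ mnorm_bdd]) auto

lemma mnorm_le: "0 \<le> c \<Longrightarrow> (\<And>v. (\<Sum>j<n. (v j)\<^sup>2) \<le> 1 \<Longrightarrow> mvn n A v \<le> c) \<Longrightarrow> mnorm n A \<le> c"
  unfolding mnorm_eq by (rule cSup_least) auto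

lemma mnorm_upper: "mnorm n A \<le> sqrt (real n * (\<Sum>i<n. \<Sum>j<n. \<bar>A i j\<bar>)\<^sup>2)"
  by (rule mnorm_le) (auto intro: mvn_bound)

lemma mnorm_e0: "\<bar>A 0 0\<bar> \<le> mnorm n A" if "1 \<le> n"
proof -
  have "mvn n A (ev 0) \<le> mnorm n A" using that
    by (intro mnorm_ge) (simp add: power2_eq_square ev_orth)
  moreover have "\<bar>A 0 0\<bar> \<le> mvn n A (ev 0)"
  proof -
    have s: "(\<Sum>j<n. A i j * ev 0 j) = A i 0" for i
    proof -
      have "(\<Sum>j<n. A i j * ev 0 j) = (\<Sum>j<n. if j = 0 \<and> True then A i j else 0)"
        unfolding ev_def by (intro sum.cong refl) auto
      then show ?thesis using that by (simp only: sum_delta1) simp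
    qed
    have "(A 0 0)\<^sup>2 \<le> (\<Sum>i<n. (A i 0)\<^sup>2)" using that by (intro member_le_sum) auto
    then show ?thesis unfolding mvn_def s by (simp add: real_le_rsqrt)
  qed
  ultimately show ?thesis by simp
qed

lemma mnorm_2col: "sqrt ((A 0 0)\<^sup>2 + (A 1 0)\<^sup>2) \<le> mnorm 2 A"
proof -
  have "mvn 2 A (ev 0) \<le> mnorm 2 A"
    by (intro mnorm_ge) (simp add: ev_def numeral_2_eq_2)
  moreover have "mvn 2 A (ev 0) = sqrt ((A 0 0)\<^sup>2 + (A 1 0)\<^sup>2)"
    unfolding mvn_def by (simp add: ev_def numeral_2_eq_2)
  ultimately show ?thesis by simp
qed


lemma sumsq_zero: fixes u :: "nat \<Rightarrow> real"
  assumes "(\<Sum>k<n. u k * u k) = 0" "k < n" shows "u k = 0"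
proof -
  have "\<forall>k\<in>{..<n}. u k * u k = 0" using assms(1) by (subst sum_nonneg_eq_0_iff[symmetric]) auto
  then show ?thesis using assms(2) by auto
qed

lemma quad:
  assumes K: "nc_convex K" and f: "f \<in> ncA K" and n: "1 \<le> n" and x: "x \<in> K n"
  shows "\<exists>y\<in>K 1. (\<Sum>i<n. \<Sum>j<n. u i * f n x i j * u j) = (\<Sum>k<n. u k * u k) * f 1 y 0 0"
proof (cases "(\<Sum>k<n. u k * u k) = 0")
  case True
  have "isom n 1 (col n (ev 0))" using n by (intro col_isom) (simp add: ev_orth)
  then have "conj (mtr (col n (ev 0))) n x \<in> K 1" by (intro Kcomp[OF K n _ _ x]) auto
  moreover have "(\<Sum>i<n. \<Sum>j<n. u i * f n x i j * u j) = 0"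
    using sumsq_zero[OF True] by simp
  ultimately show ?thesis using True by auto
next
  case False
  let ?s = "\<Sum>k<n. u k * u k"
  have s0: "?s > 0" using False by (metis (no_types) less_eq_real_def sum_nonneg zero_le_square)
  define uh where "uh = (\<lambda>k. u k / sqrt ?s)"
  have uh1: "(\<Sum>k<n. uh k * uh k) = 1"
    unfolding uh_def using s0 by (simp add: sum_divide_distrib[symmetric])
  have b: "isom n 1 (col n uh)" by (rule col_isom[OF uh1])
  let ?y = "conj (mtr (col n uh)) n x"
  have y: "?y \<in> K 1" by (intro Kcomp[OF K n _ b x]) auto
  have "f 1 ?y = conj (mtr (col n uh)) n (f n x)" by (intro fA_comp[OF f n _ b x]) auto
  then have "f 1 ?y 0 0 = (\<Sum>k<n. \<Sum>l<n. (uh k * uh l) * f n x k l)" by (simp add: conj_col)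
  also have "\<dots> = (\<Sum>i<n. \<Sum>j<n. u i * f n x i j * u j) / ?s"
    unfolding uh_def using s0
    by (simp add: sum_divide_distrib algebra_simps)
  finally have e: "f 1 ?y 0 0 = (\<Sum>i<n. \<Sum>j<n. u i * f n x i j * u j) / ?s" .
  show ?thesis
  proof (rule bexI[OF _ y])
    show "(\<Sum>i<n. \<Sum>j<n. u i * f n x i j * u j) = ?s * f 1 ?y 0 0" using e s0 by simp
  qed
qed

lemma lev1_bound:
  assumes K: "nc_convex K" and f: "f \<in> ncA K" and y: "y \<in> K 1"
  shows "\<bar>f 1 y 0 0\<bar> \<le> mnorm 2 (f 2 (blk 1 y y))"
proof -
  have "f 2 (blk 1 y y) = blk 1 (f 1 y) (f 1 y)" using fblk[OF f _ y y] by simp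
  then have "f 2 (blk 1 y y) 0 0 = f 1 y 0 0" by (simp add: blk_entry)
  then show ?thesis using mnorm_e0[of 2 "f 2 (blk 1 y y)"] by simp
qed

lemma cs2: fixes a b c d :: real shows "\<bar>c * a + d * b\<bar> \<le> sqrt (c\<^sup>2 + d\<^sup>2) * sqrt (a\<^sup>2 + b\<^sup>2)"
proof -
  have "(c * a + d * b)\<^sup>2 \<le> (c\<^sup>2 + d\<^sup>2) * (a\<^sup>2 + b\<^sup>2)"
  proof -
    have "(c\<^sup>2 + d\<^sup>2) * (a\<^sup>2 + b\<^sup>2) - (c * a + d * b)\<^sup>2 = (c * b - d * a)\<^sup>2"
      by (simp add: power2_eq_square algebra_simps)
    then show ?thesis by (metis diff_ge_0_iff_ge zero_le_power2)
  qed
  then have "sqrt ((c * a + d * b)\<^sup>2) \<le> sqrt ((c\<^sup>2 + d\<^sup>2) * (a\<^sup>2 + b\<^sup>2))" by (rule real_sqrt_le_mono)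
  then show ?thesis by (simp add: real_sqrt_mult)
qed


lemma lev2_norm:
  assumes K: "nc_convex K" and f: "f \<in> ncA K" and n: "1 \<le> n" and x: "x \<in> K n"
    and N: "0 \<le> N" and HN: "\<And>y. y \<in> K 2 \<Longrightarrow> mnorm 2 (f 2 y) \<le> N"
  shows "mnorm n (f n x) \<le> N"
proof (rule mnorm_le[OF N])
  fix v :: "nat \<Rightarrow> real" assume v: "(\<Sum>j<n. (v j)\<^sup>2) \<le> 1"
  define A where "A = f n x"
  define w where "w = (\<lambda>i. \<Sum>j<n. A i j * v j)"
  define W where "W = (\<Sum>i<n. (w i)\<^sup>2)"
  have W0: "0 \<le> W" unfolding W_def by (intro sum_nonneg) auto
  have mv: "mvn n (f n x) v = sqrt W" unfolding mvn_def W_def w_def A_def by simp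
  have H1: "\<bar>f 1 y 0 0\<bar> \<le> N" if "y \<in> K 1" for y
  proof -
    have "blk 1 y y \<in> K 2" using Kblk[OF K _ that that] by simp
    then show ?thesis using lev1_bound[OF K f that] HN by force
  qed
  define s where "s = (\<Sum>j<n. v j * v j)"
  have s1: "s \<le> 1" using v unfolding s_def by (simp add: power2_eq_square)
  have "W \<le> sqrt W * N"
  proof (cases "s = 0")
    case True
    then have "v j = 0" if "j < n" for j using sumsq_zero that unfolding s_def by blast
    then have "w i = 0" for i unfolding w_def by simp
    then show ?thesis unfolding W_def using N by simp
  next
    case False
    have s0: "s > 0" using False unfolding s_def by (metis (no_types) less_eq_real_def sum_nonneg zero_le_square)
    define vh where "vh = (\<lambda>k. v k / sqrt s)"
    have vh1: "(\<Sum>k<n. vh k * vh k) = 1"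
      unfolding vh_def using s0 by (simp add: sum_divide_distrib[symmetric] s_def)
    have vv: "v j = sqrt s * vh j" for j unfolding vh_def using s0 by simp
    define X where "X = (\<Sum>i<n. \<Sum>j<n. w i * A i j * vh j)"
    have WX: "W = sqrt s * X"
    proof -
      have "W = (\<Sum>i<n. w i * (\<Sum>j<n. A i j * (sqrt s * vh j)))"
        unfolding W_def power2_eq_square using vv by (simp add: w_def)
      also have "\<dots> = sqrt s * X" unfolding X_def
        by (simp add: sum_distrib_left sum_distrib_right algebra_simps)
      finally show ?thesis .
    qed
    define c where "c = (\<Sum>i<n. vh i * w i)"
    define w' where "w' = (\<lambda>i. w i - c * vh i)"
    define r2 where "r2 = (\<Sum>i<n. w' i * w' i)"
    have r20: "0 \<le> r2" unfolding r2_def by (intro sum_nonneg) auto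
    have orth: "(\<Sum>i<n. vh i * w' i) = 0"
    proof -
      have "(\<Sum>i<n. vh i * w' i) = (\<Sum>i<n. vh i * w i) - c * (\<Sum>i<n. vh i * vh i)"
        unfolding w'_def by (simp add: right_diff_distrib sum_subtractf sum_distrib_left mult_ac)
      then show ?thesis using vh1 unfolding c_def by simp
    qed
    have pyth: "W = c\<^sup>2 + r2"
    proof -
      have "W = (\<Sum>i<n. (c * vh i + w' i) * (c * vh i + w' i))"
        unfolding W_def w'_def power2_eq_square by simp
      also have "\<dots> = c\<^sup>2 * (\<Sum>i<n. vh i * vh i) + 2 * c * (\<Sum>i<n. vh i * w' i) + r2"
        unfolding r2_def power2_eq_square
        by (simp add: algebra_simps sum.distrib sum_distrib_left)
      finally show ?thesis using vh1 orth by simp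
    qed
    have "\<bar>X\<bar> \<le> sqrt W * N"
    proof (cases "r2 = 0")
      case True
      then have "w' i = 0" if "i < n" for i using sumsq_zero that unfolding r2_def by blast
      then have wi: "w i = c * vh i" if "i < n" for i using that unfolding w'_def by force
      obtain y where y: "y \<in> K 1" and yq: "(\<Sum>i<n. \<Sum>j<n. vh i * A i j * vh j) = (\<Sum>k<n. vh k * vh k) * f 1 y 0 0"
        using quad[OF K f n x, of vh] unfolding A_def by blast
      have "X = c * (\<Sum>i<n. \<Sum>j<n. vh i * A i j * vh j)"
        unfolding X_def using wi by (simp add: sum_distrib_left algebra_simps)
      also have "\<dots> = c * f 1 y 0 0" using yq vh1 by simp
      finally have "\<bar>X\<bar> = \<bar>c\<bar> * \<bar>f 1 y 0 0\<bar>" by (simp add: abs_mult)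
      also have "\<dots> \<le> \<bar>c\<bar> * N" using H1[OF y] by (intro mult_left_mono) auto
      also have "\<bar>c\<bar> = sqrt W" using pyth True by simp
      finally show ?thesis .
    next
      case False
      have r2p: "r2 > 0" using False r20 by simp
      define uh where "uh = (\<lambda>k. w' k / sqrt r2)"
      have uh1: "(\<Sum>k<n. uh k * uh k) = 1"
        unfolding uh_def using r2p by (simp add: sum_divide_distrib[symmetric] r2_def)
      have vu: "(\<Sum>k<n. vh k * uh k) = 0"
        unfolding uh_def using orth by (simp add: sum_divide_distrib[symmetric])
      have wi: "w i = c * vh i + sqrt r2 * uh i" for i
        unfolding uh_def w'_def using r2p by simp
      have b: "isom n 2 (col2 n vh uh)" using vh1 uh1 vu by (intro col2_isom) auto
      let ?y = "conj (mtr (col2 n vh uh)) n x"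
      have y: "?y \<in> K 2" by (intro Kcomp[OF K n _ b x]) auto
      have fy: "f 2 ?y = conj (mtr (col2 n vh uh)) n A"
        unfolding A_def by (intro fA_comp[OF f n _ b x]) auto
      define B where "B = f 2 ?y"
      have B00: "B 0 0 = (\<Sum>i<n. \<Sum>j<n. vh i * A i j * vh j)"
        unfolding B_def fy by (simp add: conj_col2 algebra_simps)
      have B10: "B 1 0 = (\<Sum>i<n. \<Sum>j<n. uh i * A i j * vh j)"
        unfolding B_def fy by (simp add: conj_col2 algebra_simps)
      have "X = c * B 0 0 + sqrt r2 * B 1 0"
        unfolding X_def B00 B10 wi by (simp add: sum_distrib_left sum.distrib algebra_simps)
      then have "\<bar>X\<bar> \<le> sqrt (c\<^sup>2 + (sqrt r2)\<^sup>2) * sqrt ((B 0 0)\<^sup>2 + (B 1 0)\<^sup>2)" using cs2 by simp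
      also have "\<dots> = sqrt W * sqrt ((B 0 0)\<^sup>2 + (B 1 0)\<^sup>2)" using pyth r20 by simp
      also have "\<dots> \<le> sqrt W * N"
      proof (rule mult_left_mono)
        have "sqrt ((B 0 0)\<^sup>2 + (B 1 0)\<^sup>2) \<le> mnorm 2 B" by (rule mnorm_2col)
        also have "\<dots> \<le> N" unfolding B_def by (rule HN[OF y])
        finally show "sqrt ((B 0 0)\<^sup>2 + (B 1 0)\<^sup>2) \<le> N" .
      qed (use W0 in simp)
      finally show ?thesis .
    qed
    then have "W \<le> sqrt s * (sqrt W * N)" unfolding WX using s0 by (simp add: abs_le_iff mult_left_mono)
    also have "\<dots> \<le> 1 * (sqrt W * N)" using s1 s0 N W0 by (intro mult_right_mono) auto
    finally show ?thesis by simp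
  qed
  then show "mvn n (f n x) v \<le> N" unfolding mv
  proof -
    assume h: "W \<le> sqrt W * N"
    show "sqrt W \<le> N"
    proof (cases "W = 0")
      case True then show ?thesis using N by simp
    next
      case False
      then have "sqrt W > 0" using W0 by simp
      moreover have "sqrt W * sqrt W \<le> sqrt W * N" using h W0 by (simp add: real_sqrt_mult_self)
      ultimately show ?thesis by (metis mult_le_cancel_left_pos)
    qed
  qed
qed


lemma lev1_norm_sym:
  assumes K: "nc_convex K" and S: "nc_symmetric K" and f: "f \<in> ncA K" and n: "1 \<le> n" and x: "x \<in> K n"
    and N: "0 \<le> N" and HN: "\<And>y. y \<in> K 1 \<Longrightarrow> \<bar>f 1 y 0 0\<bar> \<le> N"
  shows "mnorm n (f n x) \<le> N"
proof (rule mnorm_le[OF N])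
  fix v :: "nat \<Rightarrow> real" assume v: "(\<Sum>j<n. (v j)\<^sup>2) \<le> 1"
  define A where "A = f n x"
  have As: "A i j = A j i" for i j unfolding A_def by (rule symn[OF K S f])
  define Q where "Q = (\<lambda>u. \<Sum>i<n. \<Sum>j<n. u i * A i j * u j)"
  have HQ: "\<bar>Q u\<bar> \<le> N * (\<Sum>k<n. u k * u k)" for u
  proof -
    obtain y where y: "y \<in> K 1" and yq: "Q u = (\<Sum>k<n. u k * u k) * f 1 y 0 0"
      using quad[OF K f n x, of u] unfolding Q_def A_def by blast
    have "\<bar>Q u\<bar> = (\<Sum>k<n. u k * u k) * \<bar>f 1 y 0 0\<bar>" unfolding yq
      by (simp add: abs_mult sum_nonneg)
    also have "\<dots> \<le> (\<Sum>k<n. u k * u k) * N" using HN[OF y] by (intro mult_left_mono) (auto intro: sum_nonneg)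
    finally show ?thesis by (simp add: mult.commute)
  qed
  define w where "w = (\<lambda>i. \<Sum>j<n. A i j * v j)"
  define W where "W = (\<Sum>i<n. (w i)\<^sup>2)"
  have W0: "0 \<le> W" unfolding W_def by (intro sum_nonneg) auto
  have mv: "mvn n (f n x) v = sqrt W" unfolding mvn_def W_def w_def A_def by simp
  define s where "s = (\<Sum>j<n. v j * v j)"
  have s1: "s \<le> 1" using v unfolding s_def by (simp add: power2_eq_square)
  have s0: "0 \<le> s" unfolding s_def by (intro sum_nonneg) auto
  show "mvn n (f n x) v \<le> N" unfolding mv
  proof (cases "W = 0")
    case True then show "sqrt W \<le> N" using N by simp
  next
    case False
    then have Wp: "W > 0" using W0 by simp
    define t where "t = 1 / sqrt W"
    have tp: "t > 0" unfolding t_def using Wp by simp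
    have sq: "sqrt W * sqrt W = W" using W0 by (metis real_sqrt_mult_self abs_of_nonneg)
    have sW: "sqrt W \<noteq> 0" using Wp by simp
    have ts: "t * sqrt W = 1" unfolding t_def using sW by simp
    have "(t * sqrt W) * (t * sqrt W) = t * t * (sqrt W * sqrt W)" by (simp only: mult_ac)
    then have tW: "t * t * W = 1" using ts sq by simp
    define B where "B = (\<Sum>i<n. \<Sum>j<n. w i * A i j * v j)"
    have WB: "W = B" unfolding W_def B_def power2_eq_square w_def
      by (simp add: sum_distrib_left algebra_simps)
    define p where "p = (\<lambda>i. t * w i + v i)"
    define m where "m = (\<lambda>i. t * w i - v i)"
    have QQ: "Q p - Q m = 4 * t * B"
    proof -
      have "Q p - Q m = (\<Sum>i<n. \<Sum>j<n. 2 * t * (w i * A i j * v j) + 2 * t * (v i * A i j * w j))"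
        unfolding Q_def p_def m_def by (simp add: sum_subtractf[symmetric] algebra_simps)
      also have "\<dots> = 2 * t * B + 2 * t * (\<Sum>i<n. \<Sum>j<n. v i * A i j * w j)"
        unfolding B_def by (simp add: sum.distrib sum_distrib_left)
      also have "(\<Sum>i<n. \<Sum>j<n. v i * A i j * w j) = B"
        unfolding B_def by (subst sum.swap) (simp add: As mult_ac)
      finally show ?thesis by simp
    qed
    have pm: "(\<Sum>k<n. p k * p k) + (\<Sum>k<n. m k * m k) = 2 * (t * t * W) + 2 * s"
      unfolding p_def m_def W_def s_def power2_eq_square
      by (simp add: sum.distrib[symmetric] sum_distrib_left algebra_simps)
    have "4 * t * W = Q p - Q m" using QQ WB by simp
    also have "\<dots> \<le> \<bar>Q p\<bar> + \<bar>Q m\<bar>" by simp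
    also have "\<dots> \<le> N * (\<Sum>k<n. p k * p k) + N * (\<Sum>k<n. m k * m k)" using HQ[of p] HQ[of m] by simp
    also have "\<dots> = N * (2 + 2 * s)" using pm tW by (simp add: distrib_left[symmetric])
    also have "\<dots> \<le> N * 4" using s1 N by (intro mult_left_mono) auto
    finally have "t * W \<le> N" by simp
    moreover have "t * W = sqrt W"
    proof -
      have "t * (sqrt W * sqrt W) = (t * sqrt W) * sqrt W" by (simp only: mult_ac)
      then show ?thesis using ts sq by simp
    qed
    ultimately show "sqrt W \<le> N" by simp
  qed
qed


definition mat1 :: "'a::zero \<Rightarrow> (nat \<Rightarrow> nat \<Rightarrow> 'a)" where
  "mat1 e = (\<lambda>i j. if i = 0 \<and> j = 0 then e else 0)"

lemma mat1_eq: "is_mat 1 1 k \<Longrightarrow> mat1 (k 0 0) = k"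
  unfolding mat1_def is_mat_def by (intro ext) auto

lemma ccomb_mat1: "ccomb t (mat1 p) (mat1 q) = mat1 (t *\<^sub>R p + (1 - t) *\<^sub>R q)"
  unfolding ccomb_def mat1_def by (intro ext) auto

definition Cc :: "(nat \<Rightarrow> 'f::real_normed_vector emat set) \<Rightarrow> (real \<times> ('f \<Rightarrow>\<^sub>L real)) set" where
  "Cc K = {(s, e). (s = 0 \<and> e = 0) \<or> (s > 0 \<and> mat1 ((1/s) *\<^sub>R e) \<in> K 1)}"

definition Gc :: "('f::real_normed_vector emat \<Rightarrow> real) \<Rightarrow> real \<times> ('f \<Rightarrow>\<^sub>L real) \<Rightarrow> real" where
  "Gc g z = (if fst z = 0 then 0 else fst z * g (mat1 ((1 / fst z) *\<^sub>R snd z)))"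

lemma A1_aff: "g \<in> A1 K \<Longrightarrow> x \<in> K 1 \<Longrightarrow> y \<in> K 1 \<Longrightarrow> 0 \<le> t \<Longrightarrow> t \<le> 1 \<Longrightarrow> g (ccomb t x y) = t * g x + (1 - t) * g y"
  unfolding A1_def by auto

lemma aux_comb: "(s::real) + t > 0 \<Longrightarrow> (s + t) * (s / (s + t) * a + (1 - s / (s + t)) * b) = s * a + t * b"
proof -
  assume h: "s + t > 0"
  have "1 - s / (s + t) = t / (s + t)" using h by (simp add: field_simps)
  then show ?thesis using h by (simp add: distrib_left)
qed

lemma Cc_fst: "a \<in> Cc K \<Longrightarrow> 0 \<le> fst a"
  unfolding Cc_def by auto

lemma Cadd:
  assumes K: "nc_convex K" and g: "g \<in> A1 K" and a: "a \<in> Cc K" and b: "b \<in> Cc K"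
  shows "a + b \<in> Cc K \<and> Gc g (a + b) = Gc g a + Gc g b"
proof -
  obtain s e where ae: "a = (s, e)" by (cases a)
  obtain t d where bd: "b = (t, d)" by (cases b)
  show ?thesis
  proof (cases "s = 0")
    case True
    then have "e = 0" using a ae unfolding Cc_def by auto
    then show ?thesis using True ae b bd by (simp add: Gc_def)
  next
    case s0: False
    then have sp: "s > 0" and k1: "mat1 ((1/s) *\<^sub>R e) \<in> K 1" using a ae unfolding Cc_def by auto
    show ?thesis
    proof (cases "t = 0")
      case True
      then have "d = 0" using b bd unfolding Cc_def by auto
      then show ?thesis using True ae a bd by (simp add: Gc_def)
    next
      case t0: False
      then have tp: "t > 0" and k2: "mat1 ((1/t) *\<^sub>R d) \<in> K 1" using b bd unfolding Cc_def by auto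
      define r where "r = s / (s + t)"
      have r: "0 \<le> r" "r \<le> 1" unfolding r_def using sp tp by auto
      have cc: "ccomb r (mat1 ((1/s) *\<^sub>R e)) (mat1 ((1/t) *\<^sub>R d)) = mat1 ((1 / (s+t)) *\<^sub>R (e + d))"
        unfolding ccomb_mat1 r_def using sp tp
        by (simp add: scaleR_add_right field_simps)
      have inK: "mat1 ((1 / (s+t)) *\<^sub>R (e + d)) \<in> K 1"
        using Kccomb[OF K _ k1 k2 r] cc by simp
      have gv: "g (mat1 ((1 / (s+t)) *\<^sub>R (e + d))) = r * g (mat1 ((1/s) *\<^sub>R e)) + (1 - r) * g (mat1 ((1/t) *\<^sub>R d))"
        using A1_aff[OF g k1 k2 r] cc by simp
      have "Gc g (a + b) = (s + t) * g (mat1 ((1 / (s+t)) *\<^sub>R (e + d)))"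
        using ae bd sp tp by (simp add: Gc_def)
      also have "\<dots> = s * g (mat1 ((1/s) *\<^sub>R e)) + t * g (mat1 ((1/t) *\<^sub>R d))"
        unfolding gv r_def using sp tp aux_comb by simp
      also have "\<dots> = Gc g a + Gc g b" using ae bd sp tp by (simp add: Gc_def)
      finally show ?thesis using inK ae bd sp tp unfolding Cc_def by auto
    qed
  qed
qed

lemma Cscale:
  assumes a: "a \<in> Cc K" and c: "0 \<le> c"
  shows "c *\<^sub>R a \<in> Cc K \<and> Gc g (c *\<^sub>R a) = c * Gc g a"
proof -
  obtain s e where ae: "a = (s, e)" by (cases a)
  show ?thesis
  proof (cases "c = 0 \<or> s = 0")
    case True
    then show ?thesis using a ae unfolding Cc_def Gc_def by auto
  next
    case False
    then have cp: "c > 0" and sp: "s > 0" using c a ae unfolding Cc_def by auto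
    have e: "(1 / (c * s)) *\<^sub>R (c *\<^sub>R e) = (1/s) *\<^sub>R e" using cp by simp
    show ?thesis using a ae cp sp e unfolding Cc_def Gc_def by auto
  qed
qed

lemma C0: "(0, 0) \<in> Cc K" unfolding Cc_def by auto
lemma G0: "Gc g (0, 0) = 0" unfolding Gc_def by auto

lemma Cpt: assumes K: "nc_convex K" and k: "k \<in> K 1" shows "(1, k 0 0) \<in> Cc K" "Gc g (1, k 0 0) = g k"
  using mat1_eq[OF Kmat[OF K _ k]] k unfolding Cc_def Gc_def by auto

definition Vc :: "(nat \<Rightarrow> 'f::real_normed_vector emat set) \<Rightarrow> (real \<times> ('f \<Rightarrow>\<^sub>L real)) set" where
  "Vc K = {a - b | a b. a \<in> Cc K \<and> b \<in> Cc K}"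

definition Lc where
  "Lc K g z = (SOME r. \<exists>a b. a \<in> Cc K \<and> b \<in> Cc K \<and> z = a - b \<and> r = Gc g a - Gc g b)"

lemma Lwd:
  assumes K: "nc_convex K" and g: "g \<in> A1 K" and C: "a \<in> Cc K" "b \<in> Cc K" "a' \<in> Cc K" "b' \<in> Cc K"
    and e: "a - b = a' - b'"
  shows "Gc g a - Gc g b = Gc g a' - Gc g b'"
proof -
  have "a + b' = a' + b" using e by (simp add: algebra_simps)
  then have "Gc g (a + b') = Gc g (a' + b)" by simp
  then show ?thesis using Cadd[OF K g C(1) C(4)] Cadd[OF K g C(3) C(2)] by simp
qed

lemma Lrep:
  assumes K: "nc_convex K" and g: "g \<in> A1 K" and C: "a \<in> Cc K" "b \<in> Cc K"
  shows "Lc K g (a - b) = Gc g a - Gc g b"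
proof -
  have ex: "\<exists>r. \<exists>a' b'. a' \<in> Cc K \<and> b' \<in> Cc K \<and> a - b = a' - b' \<and> r = Gc g a' - Gc g b'"
    using C by blast
  obtain a' b' where ab: "a' \<in> Cc K" "b' \<in> Cc K" "a - b = a' - b'" "Lc K g (a - b) = Gc g a' - Gc g b'"
    using someI_ex[OF ex] unfolding Lc_def by blast
  then show ?thesis using Lwd[OF K g C ab(1,2,3)] by simp
qed

lemma Vadd:
  assumes K: "nc_convex K" and g: "g \<in> A1 K" and z: "z \<in> Vc K" and w: "w \<in> Vc K"
  shows "z + w \<in> Vc K \<and> Lc K g (z + w) = Lc K g z + Lc K g w"
proof -
  obtain a b where ab: "a \<in> Cc K" "b \<in> Cc K" "z = a - b" using z unfolding Vc_def by blast
  obtain a' b' where ab': "a' \<in> Cc K" "b' \<in> Cc K" "w = a' - b'" using w unfolding Vc_def by blast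
  have s: "z + w = (a + a') - (b + b')" using ab ab' by (simp add: algebra_simps)
  have c1: "a + a' \<in> Cc K" "b + b' \<in> Cc K" using Cadd[OF K g ab(1) ab'(1)] Cadd[OF K g ab(2) ab'(2)] by auto
  have "Lc K g (z + w) = Gc g (a + a') - Gc g (b + b')" unfolding s by (rule Lrep[OF K g c1])
  also have "\<dots> = Lc K g z + Lc K g w"
    using Cadd[OF K g ab(1) ab'(1)] Cadd[OF K g ab(2) ab'(2)] Lrep[OF K g ab(1,2)] Lrep[OF K g ab'(1,2)] ab(3) ab'(3)
    by simp
  finally show ?thesis using s c1 unfolding Vc_def by blast
qed

lemma Vscale:
  assumes K: "nc_convex K" and g: "g \<in> A1 K" and z: "z \<in> Vc K"
  shows "c *\<^sub>R z \<in> Vc K \<and> Lc K g (c *\<^sub>R z) = c * Lc K g z"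
proof -
  obtain a b where ab: "a \<in> Cc K" "b \<in> Cc K" "z = a - b" using z unfolding Vc_def by blast
  show ?thesis
  proof (cases "0 \<le> c")
    case True
    have s: "c *\<^sub>R z = c *\<^sub>R a - c *\<^sub>R b" using ab by (simp add: scaleR_diff_right)
    have c1: "c *\<^sub>R a \<in> Cc K" "c *\<^sub>R b \<in> Cc K" using Cscale[OF ab(1) True] Cscale[OF ab(2) True] by auto
    have "Lc K g (c *\<^sub>R z) = c * Lc K g z"
      unfolding s Lrep[OF K g c1] using Cscale[OF ab(1) True, of g] Cscale[OF ab(2) True, of g] Lrep[OF K g ab(1,2)] ab(3)
      by (simp add: right_diff_distrib)
    then show ?thesis using s c1 unfolding Vc_def by blast
  next
    case False
    then have c': "0 \<le> - c" by simp
    have s: "c *\<^sub>R z = (-c) *\<^sub>R b - (-c) *\<^sub>R a" using ab by (simp add: scaleR_diff_right)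
    have c1: "(-c) *\<^sub>R b \<in> Cc K" "(-c) *\<^sub>R a \<in> Cc K" using Cscale[OF ab(2) c'] Cscale[OF ab(1) c'] by auto
    have "Lc K g (c *\<^sub>R z) = c * Lc K g z"
      unfolding s Lrep[OF K g c1] using Cscale[OF ab(1) c', of g] Cscale[OF ab(2) c', of g] Lrep[OF K g ab(1,2)] ab(3)
      by (simp add: right_diff_distrib)
    then show ?thesis using s c1 unfolding Vc_def by blast
  qed
qed

lemma Vzero: fixes K :: "nat \<Rightarrow> 'f::real_normed_vector emat set"
  assumes "nc_convex K" "g \<in> A1 K"
  shows "0 \<in> Vc K" "Lc K g 0 = 0"
proof -
  have "(0::real \<times> ('f \<Rightarrow>\<^sub>L real)) = (0,0) - (0,0)" by simp
  then show "0 \<in> Vc K" unfolding Vc_def using C0 by blast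
  show "Lc K g 0 = 0" using Lrep[OF assms C0 C0] G0 by (simp add: zero_prod_def)
qed

lemma Lsum:
  assumes K: "nc_convex K" and g: "g \<in> A1 K" and T: "finite T" and z: "\<And>t. t \<in> T \<Longrightarrow> z t \<in> Vc K"
  shows "(\<Sum>t\<in>T. c t *\<^sub>R z t) \<in> Vc K \<and> Lc K g (\<Sum>t\<in>T. c t *\<^sub>R z t) = (\<Sum>t\<in>T. c t * Lc K g (z t))"
  using T z
proof (induction T rule: finite_induct)
  case empty then show ?case using Vzero[OF K g] by simp
next
  case (insert t T)
  have zt: "c t *\<^sub>R z t \<in> Vc K" "Lc K g (c t *\<^sub>R z t) = c t * Lc K g (z t)"
    using Vscale[OF K g insert.prems[of t]] by auto
  have ih: "(\<Sum>t\<in>T. c t *\<^sub>R z t) \<in> Vc K" "Lc K g (\<Sum>t\<in>T. c t *\<^sub>R z t) = (\<Sum>t\<in>T. c t * Lc K g (z t))"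
    using insert by auto
  show ?case using Vadd[OF K g zt(1) ih(1)] zt ih insert.hyps by simp
qed

lemma Lpt: assumes K: "nc_convex K" and g: "g \<in> A1 K" and k: "k \<in> K 1"
  shows "(1, k 0 0) \<in> Vc K" "Lc K g (1, k 0 0) = g k"
proof -
  have e: "((1::real), k 0 0) = (1, k 0 0) - (0, 0)" by simp
  show "(1, k 0 0) \<in> Vc K" unfolding Vc_def using Cpt[OF K k] C0 e by blast
  show "Lc K g (1, k 0 0) = g k" using Lrep[OF K g Cpt(1)[OF K k] C0] Cpt(2)[OF K k, of g] G0[of g] by simp
qed


lemma Lsum1:
  assumes K: "nc_convex K" and g: "g \<in> A1 K" and T: "finite T" and z: "\<And>t. t \<in> T \<Longrightarrow> z t \<in> Vc K"
  shows "(\<Sum>t\<in>T. z t) \<in> Vc K \<and> Lc K g (\<Sum>t\<in>T. z t) = (\<Sum>t\<in>T. Lc K g (z t))"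
  using Lsum[OF K g T z, where c="\<lambda>_. 1"] by simp

lemma half_lemma: fixes a b c :: "'a::real_vector"
  shows "(1/2) *\<^sub>R (a + b + b + c) = (1/2) *\<^sub>R (a + c) + b"
proof -
  have "(1/2) *\<^sub>R (a + b + b + c) = (1/2) *\<^sub>R (a + c) + (1/2) *\<^sub>R (b + b)"
    by (simp add: algebra_simps)
  then show ?thesis by (simp only: scaleR_half_double)
qed

definition cmp :: "nat \<Rightarrow> (nat \<Rightarrow> real) \<Rightarrow> (nat \<Rightarrow> nat \<Rightarrow> 'a::real_vector) \<Rightarrow> (nat \<Rightarrow> nat \<Rightarrow> 'a)" where
  "cmp n v x = conj (mtr (col n v)) n x"

definition uv :: "nat \<Rightarrow> nat \<Rightarrow> nat \<Rightarrow> real" where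
  "uv i j = (\<lambda>k. (ev i k + ev j k) * (1 / sqrt 2))"

lemma sum_ev_pair:
  fixes x :: "nat \<Rightarrow> nat \<Rightarrow> 'a::real_vector"
  assumes "i < n" "j < n"
  shows "(\<Sum>k<n. \<Sum>l<n. (uv i j k * uv i j l) *\<^sub>R x k l) = (1/2) *\<^sub>R (x i i + x i j + x j i + x j j)"
proof -
  have e: "uv i j k * uv i j l = (1/2) * (ev i k * ev i l + ev i k * ev j l + ev j k * ev i l + ev j k * ev j l)" for k l
    unfolding uv_def by (simp add: algebra_simps power2_eq_square[symmetric])
  have e2: "(uv i j k * uv i j l) *\<^sub>R y = (1/2) *\<^sub>R ((ev i k * ev i l) *\<^sub>R y + (ev i k * ev j l) *\<^sub>R y + (ev j k * ev i l) *\<^sub>R y + (ev j k * ev j l) *\<^sub>R y)" for k l and y :: 'a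
    unfolding e by (simp add: scaleR_add_left[symmetric])
  have "(\<Sum>k<n. \<Sum>l<n. (uv i j k * uv i j l) *\<^sub>R x k l) =
     (1/2) *\<^sub>R ((\<Sum>k<n. \<Sum>l<n. (ev i k * ev i l) *\<^sub>R x k l) + (\<Sum>k<n. \<Sum>l<n. (ev i k * ev j l) *\<^sub>R x k l)
       + (\<Sum>k<n. \<Sum>l<n. (ev j k * ev i l) *\<^sub>R x k l) + (\<Sum>k<n. \<Sum>l<n. (ev j k * ev j l) *\<^sub>R x k l))"
    unfolding e2 by (simp add: scaleR_add_right sum.distrib scaleR_sum_right)
  then show ?thesis using assms by (simp add: sum_ev)
qed

lemma sq_half: "(a + b) * (1/sqrt 2) * ((a + b) * (1/sqrt 2)) = ((a::real)*a + 2*(a*b) + b*b)/2"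
proof -
  have s2: "sqrt 2 * sqrt 2 = (2::real)" by simp
  have h: "(1/sqrt 2) * (1/sqrt 2) = (1/2::real)" using s2 by (simp add: divide_simps)
  have "(a + b) * (1/sqrt 2) * ((a + b) * (1/sqrt 2)) = (a+b)*(a+b) * ((1/sqrt 2) * (1/sqrt 2))" by (simp only: mult_ac)
  also have "\<dots> = (a*a + 2*(a*b) + b*b)/2" unfolding h by (simp add: algebra_simps)
  finally show ?thesis .
qed

lemma uv_norm: "i < n \<Longrightarrow> j < n \<Longrightarrow> i \<noteq> j \<Longrightarrow> (\<Sum>k<n. uv i j k * uv i j k) = 1"
proof -
  assume ij: "i < n" "j < n" "i \<noteq> j"
  have "(\<Sum>k<n. uv i j k * uv i j k) = (\<Sum>k<n. (ev i k * ev i k + 2 * (ev i k * ev j k) + ev j k * ev j k)/2)"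
    unfolding uv_def sq_half by simp
  also have "\<dots> = ((\<Sum>k<n. ev i k * ev i k) + 2 * (\<Sum>k<n. ev i k * ev j k) + (\<Sum>k<n. ev j k * ev j k))/2"
    by (simp add: sum_divide_distrib[symmetric] sum.distrib sum_distrib_left)
  finally show ?thesis using ij by (simp add: ev_orth)
qed

lemma cmp_K: "nc_convex K \<Longrightarrow> 1 \<le> n \<Longrightarrow> x \<in> K n \<Longrightarrow> (\<Sum>k<n. v k * v k) = 1 \<Longrightarrow> cmp n v x \<in> K 1"
proof -
  assume K: "nc_convex K" and n: "1 \<le> n" and x: "x \<in> K n" and v: "(\<Sum>k<n. v k * v k) = 1"
  have "isom n 1 (col n v)" by (rule col_isom[OF v])
  then show ?thesis unfolding cmp_def by (intro Kcomp[OF K n _ _ x]) auto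
qed

lemma cmp00: "cmp n v x 0 0 = (\<Sum>k<n. \<Sum>l<n. (v k * v l) *\<^sub>R x k l)"
  unfolding cmp_def by (simp add: conj_col)

definition frm :: "(nat \<Rightarrow> 'f::real_normed_vector emat set) \<Rightarrow> ('f emat \<Rightarrow> real) \<Rightarrow> nat \<Rightarrow> 'f emat \<Rightarrow> nat \<Rightarrow> nat \<Rightarrow> real" where
  "frm K g n x i j = (if i = j then g (cmp n (ev i) x)
      else g (cmp n (uv i j) x) - (g (cmp n (ev i) x) + g (cmp n (ev j) x)) / 2)"

lemma V_entry:
  assumes K: "nc_convex K" and S: "nc_symmetric K" and g: "g \<in> A1 K" and n: "1 \<le> n" and x: "x \<in> K n"
    and ij: "i < n" "j < n"
  shows "(if i = j then 1 else 0, x i j) \<in> Vc K \<and> Lc K g (if i = j then 1 else 0, x i j) = frm K g n x i j"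
proof -
  have evn: "(\<Sum>k<n. ev i k * ev i k) = 1" "(\<Sum>k<n. ev j k * ev j k) = 1" using ij by (auto simp: ev_orth)
  have pi: "cmp n (ev i) x \<in> K 1" "cmp n (ev j) x \<in> K 1" using cmp_K[OF K n x] evn by auto
  have pi0: "cmp n (ev i) x 0 0 = x i i" "cmp n (ev j) x 0 0 = x j j" using ij by (simp_all add: cmp00 sum_ev)
  show ?thesis
  proof (cases "i = j")
    case True
    then show ?thesis using Lpt[OF K g pi(1)] pi0 unfolding frm_def by simp
  next
    case False
    have q: "cmp n (uv i j) x \<in> K 1" using cmp_K[OF K n x uv_norm[OF ij False]] .
    have xs: "x j i = x i j" using S x n unfolding nc_symmetric_def mtr_def by metis
    have q0: "cmp n (uv i j) x 0 0 = (1/2) *\<^sub>R (x i i + x j j) + x i j"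
      using ij xs by (simp add: cmp00 sum_ev_pair half_lemma)
    have e: "((0::real), x i j) = (1, cmp n (uv i j) x 0 0) + (- 1/2) *\<^sub>R (1, cmp n (ev i) x 0 0) + (- 1/2) *\<^sub>R (1, cmp n (ev j) x 0 0)"
      unfolding q0 pi0 by (simp add: algebra_simps scaleR_add_right)
    have v1: "(- 1/2) *\<^sub>R ((1::real), cmp n (ev i) x 0 0) \<in> Vc K"
         "Lc K g ((- 1/2) *\<^sub>R ((1::real), cmp n (ev i) x 0 0)) = (-1/2) * g (cmp n (ev i) x)"
      using Vscale[OF K g Lpt(1)[OF K g pi(1)], of "-1/2"] Lpt(2)[OF K g pi(1)] by auto
    have v2: "(- 1/2) *\<^sub>R ((1::real), cmp n (ev j) x 0 0) \<in> Vc K"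
         "Lc K g ((- 1/2) *\<^sub>R ((1::real), cmp n (ev j) x 0 0)) = (-1/2) * g (cmp n (ev j) x)"
      using Vscale[OF K g Lpt(1)[OF K g pi(2)], of "-1/2"] Lpt(2)[OF K g pi(2)] by auto
    note a1 = Vadd[OF K g Lpt(1)[OF K g q] v1(1)]
    note a2 = Vadd[OF K g a1[THEN conjunct1] v2(1)]
    show ?thesis using False e a1 a2 v1 v2 Lpt(2)[OF K g q] unfolding frm_def by (simp add: add_divide_distrib)
  qed
qed


definition Fc :: "(nat \<Rightarrow> 'f::real_normed_vector emat set) \<Rightarrow> ('f emat \<Rightarrow> real) \<Rightarrow> nat \<Rightarrow> 'f emat \<Rightarrow> rmat" where
  "Fc K g n x = (if 1 \<le> n \<and> x \<in> K n then (\<lambda>i j. if i < n \<and> j < n then Lc K g (if i = j then 1 else 0, x i j) else 0)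
     else (\<lambda>i j. 0))"

lemma Ldouble:
  assumes K: "nc_convex K" and g: "g \<in> A1 K" and A: "finite A" and B: "finite B"
    and z: "\<And>k l. k \<in> A \<Longrightarrow> l \<in> B \<Longrightarrow> z k l \<in> Vc K"
  shows "(\<Sum>k\<in>A. \<Sum>l\<in>B. c k l *\<^sub>R z k l) \<in> Vc K \<and>
     Lc K g (\<Sum>k\<in>A. \<Sum>l\<in>B. c k l *\<^sub>R z k l) = (\<Sum>k\<in>A. \<Sum>l\<in>B. c k l * Lc K g (z k l))"
proof -
  have inner: "(\<Sum>l\<in>B. c k l *\<^sub>R z k l) \<in> Vc K \<and> Lc K g (\<Sum>l\<in>B. c k l *\<^sub>R z k l) = (\<Sum>l\<in>B. c k l * Lc K g (z k l))"
    if "k \<in> A" for k using Lsum[OF K g B, of "z k" "c k"] z that by blast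
  show ?thesis using Lsum1[OF K g A, of "\<lambda>k. \<Sum>l\<in>B. c k l *\<^sub>R z k l"] inner by simp
qed

lemma Fc_in:
  assumes "1 \<le> n" "x \<in> K n" "i < n" "j < n"
  shows "Fc K g n x i j = Lc K g (if i = j then 1 else 0, x i j)"
  using assms unfolding Fc_def by simp

lemma Fc_comp:
  assumes K: "nc_convex K" and S: "nc_symmetric K" and g: "g \<in> A1 K" and n: "1 \<le> n" and m: "1 \<le> m"
    and b: "isom n m \<beta>" and x: "x \<in> K n"
  shows "Fc K g m (conj (mtr \<beta>) n x) = conj (mtr \<beta>) n (Fc K g n x)"
proof (rule ext, rule ext)
  fix a b'
  let ?y = "conj (mtr \<beta>) n x"
  have y: "?y \<in> K m" by (rule Kcomp[OF K n m b x])
  have bm: "is_mat n m \<beta>" using b unfolding isom_def by simp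
  show "Fc K g m ?y a b' = conj (mtr \<beta>) n (Fc K g n x) a b'"
  proof (cases "a < m \<and> b' < m")
    case False
    have "Fc K g m ?y a b' = 0" using False y m unfolding Fc_def by auto
    moreover have "conj (mtr \<beta>) n (Fc K g n x) a b' = 0"
      using False bm unfolding conj_def mtr_def is_mat_def by auto
    ultimately show ?thesis by simp
  next
    case True
    let ?z = "\<lambda>k l. ((if k = l then 1 else 0)::real, x k l)"
    have zV: "\<And>k l. k \<in> {..<n} \<Longrightarrow> l \<in> {..<n} \<Longrightarrow> ?z k l \<in> Vc K"
      using V_entry[OF K S g n x] by auto
    have fst1: "(\<Sum>k<n. \<Sum>l<n. (\<beta> k a * \<beta> l b') * (if k = l then 1 else 0)) = (\<Sum>k<n. \<beta> k a * \<beta> k b')"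
      by (intro sum.cong refl) (simp add: if_distrib sum_delta1[where Q=True, simplified] cong: if_cong)
    have pair: "((if a = b' then 1 else 0)::real, ?y a b') = (\<Sum>k<n. \<Sum>l<n. (\<beta> k a * \<beta> l b') *\<^sub>R ?z k l)"
      using True b fst1 unfolding isom_def
      by (simp add: prod_eq_iff fst_sum snd_sum conj_def mtr_def)
    have "Fc K g m ?y a b' = Lc K g (\<Sum>k<n. \<Sum>l<n. (\<beta> k a * \<beta> l b') *\<^sub>R ?z k l)"
      using Fc_in[of m ?y K, OF m y] True pair by simp
    also have "\<dots> = (\<Sum>k<n. \<Sum>l<n. (\<beta> k a * \<beta> l b') * Lc K g (?z k l))"
      using Ldouble[OF K g finite_lessThan finite_lessThan, where z="?z" and c="\<lambda>k l. \<beta> k a * \<beta> l b'", OF zV] by blast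
    also have "\<dots> = conj (mtr \<beta>) n (Fc K g n x) a b'"
      unfolding conj_def mtr_def using Fc_in[of n x K, OF n x] by simp
    finally show ?thesis .
  qed
qed

lemma Fc_dsum:
  assumes K: "nc_convex K" and S: "nc_symmetric K" and g: "g \<in> A1 K" and D: "dsum_data n I d \<alpha>"
    and x: "\<And>i. i \<in> I \<Longrightarrow> x i \<in> K (d i)"
  shows "Fc K g n (dsum I d \<alpha> x) = dsum I d \<alpha> (\<lambda>i. Fc K g (d i) (x i))"
proof (rule ext, rule ext)
  fix a b'
  let ?y = "dsum I d \<alpha> x"
  have y: "?y \<in> K n" by (rule Kdsum[OF K D x])
  have n: "1 \<le> n" and I: "finite I" and di: "\<And>i. i \<in> I \<Longrightarrow> 1 \<le> d i \<and> isom n (d i) (\<alpha> i)"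
    and sa: "\<forall>a<n. \<forall>b<n. (\<Sum>i\<in>I. \<Sum>c<d i. \<alpha> i a c * \<alpha> i b c) = (if a = b then 1 else 0)"
    using D unfolding dsum_data_def by auto
  show "Fc K g n ?y a b' = dsum I d \<alpha> (\<lambda>i. Fc K g (d i) (x i)) a b'"
  proof (cases "a < n \<and> b' < n")
    case False
    have "Fc K g n ?y a b' = 0" using False y n unfolding Fc_def by auto
    moreover have "dsum I d \<alpha> (\<lambda>i. Fc K g (d i) (x i)) a b' = 0"
    proof -
      have "conj (\<alpha> i) (d i) (Fc K g (d i) (x i)) a b' = 0" if "i \<in> I" for i
        using False di[OF that] unfolding conj_def isom_def is_mat_def by auto
      then show ?thesis unfolding dsum_def by simp
    qed
    ultimately show ?thesis by simp
  next
    case True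
    let ?z = "\<lambda>i k l. ((if k = l then 1 else 0)::real, x i k l)"
    have zV: "\<And>k l. k \<in> {..<d i} \<Longrightarrow> l \<in> {..<d i} \<Longrightarrow> ?z i k l \<in> Vc K" if "i \<in> I" for i
      using V_entry[OF K S g _ x[OF that]] di[OF that] by auto
    have fst1: "(\<Sum>k<d i. \<Sum>l<d i. (\<alpha> i a k * \<alpha> i b' l) * (if k = l then 1 else 0)) = (\<Sum>k<d i. \<alpha> i a k * \<alpha> i b' k)" for i
      by (intro sum.cong refl) (simp add: if_distrib sum_delta1[where Q=True, simplified] cong: if_cong)
    have pair: "((if a = b' then 1 else 0)::real, ?y a b') = (\<Sum>i\<in>I. \<Sum>k<d i. \<Sum>l<d i. (\<alpha> i a k * \<alpha> i b' l) *\<^sub>R ?z i k l)"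
      using True sa fst1 by (simp add: prod_eq_iff fst_sum snd_sum dsum_def conj_def)
    have inner: "(\<Sum>k<d i. \<Sum>l<d i. (\<alpha> i a k * \<alpha> i b' l) *\<^sub>R ?z i k l) \<in> Vc K \<and>
       Lc K g (\<Sum>k<d i. \<Sum>l<d i. (\<alpha> i a k * \<alpha> i b' l) *\<^sub>R ?z i k l) = (\<Sum>k<d i. \<Sum>l<d i. (\<alpha> i a k * \<alpha> i b' l) * Lc K g (?z i k l))"
      if "i \<in> I" for i
      using Ldouble[OF K g finite_lessThan finite_lessThan, where z="?z i" and c="\<lambda>k l. \<alpha> i a k * \<alpha> i b' l", OF zV[OF that]] by blast
    have "Fc K g n ?y a b' = Lc K g (\<Sum>i\<in>I. \<Sum>k<d i. \<Sum>l<d i. (\<alpha> i a k * \<alpha> i b' l) *\<^sub>R ?z i k l)"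
      using Fc_in[of n ?y K, OF n y] True pair by simp
    also have "\<dots> = (\<Sum>i\<in>I. \<Sum>k<d i. \<Sum>l<d i. (\<alpha> i a k * \<alpha> i b' l) * Lc K g (?z i k l))"
      using Lsum1[OF K g I, of "\<lambda>i. \<Sum>k<d i. \<Sum>l<d i. (\<alpha> i a k * \<alpha> i b' l) *\<^sub>R ?z i k l"] inner by simp
    also have "\<dots> = dsum I d \<alpha> (\<lambda>i. Fc K g (d i) (x i)) a b'"
      unfolding dsum_def conj_def
    proof (intro sum.cong refl)
      fix i k l assume i: "i \<in> I" and k: "k \<in> {..<d i}" and l: "l \<in> {..<d i}"
      show "\<alpha> i a k * \<alpha> i b' l * Lc K g (?z i k l) = (\<alpha> i a k * \<alpha> i b' l) *\<^sub>R Fc K g (d i) (x i) k l"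
        using Fc_in[of "d i" "x i" K, OF _ x[OF i]] di[OF i] k l by simp
    qed
    finally show ?thesis .
  qed
qed

lemma cont_gcmp:
  assumes K: "nc_convex K" and g: "g \<in> A1 K" and n: "1 \<le> n" and v: "(\<Sum>k<n. v k * v k) = 1"
  shows "continuous_map (subtopology wtop (K n)) euclidean (\<lambda>x. g (cmp n v x))"
proof -
  have c1: "continuous_map (subtopology wtop (K n)) (subtopology wtop (K 1)) (cmp n v)"
    unfolding cmp_def[abs_def] by (rule cont_conj_sub) (use cmp_K[OF K n _ v] in \<open>simp add: cmp_def\<close>)
  have c2: "continuous_map (subtopology wtop (K 1)) euclidean g" using g unfolding A1_def by blast
  show ?thesis using continuous_map_compose[OF c1 c2] by (simp add: o_def)
qed

lemma cont_frm:
  assumes K: "nc_convex K" and g: "g \<in> A1 K" and n: "1 \<le> n" and ij: "i < n" "j < n"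
  shows "continuous_map (subtopology wtop (K n)) euclidean (\<lambda>x. frm K g n x i j)"
proof (cases "i = j")
  case True
  then show ?thesis unfolding frm_def using cont_gcmp[OF K g n, of "ev i"] ij by (simp add: ev_orth)
next
  case False
  have c: "continuous_map (subtopology wtop (K n)) euclidean (\<lambda>x. g (cmp n (uv i j) x))"
          "continuous_map (subtopology wtop (K n)) euclidean (\<lambda>x. g (cmp n (ev i) x))"
          "continuous_map (subtopology wtop (K n)) euclidean (\<lambda>x. g (cmp n (ev j) x))"
    using cont_gcmp[OF K g n] uv_norm[OF ij False] ij by (auto simp: ev_orth)
  show ?thesis unfolding frm_def using False
    by (simp, intro continuous_map_diff continuous_map_real_divide continuous_map_add c) auto
qed

lemma Fc_cont:
  assumes K: "nc_convex K" and S: "nc_symmetric K" and g: "g \<in> A1 K" and n: "1 \<le> n"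
  shows "continuous_map (subtopology wtop (K n)) euclidean (Fc K g n)"
  unfolding cont_rmat_iff
proof (intro allI)
  fix i j
  show "continuous_map (subtopology wtop (K n)) euclidean (\<lambda>x. Fc K g n x i j)"
  proof (cases "i < n \<and> j < n")
    case True
    show ?thesis
    proof (rule continuous_map_eq[OF cont_frm[OF K g n, of i j]])
      fix x assume "x \<in> topspace (subtopology wtop (K n))"
      then have x: "x \<in> K n" by simp
      show "frm K g n x i j = Fc K g n x i j" using V_entry[OF K S g n x, of i j] True Fc_in[of n x K, OF n x] by simp
    qed (use True in auto)
  next
    case False
    show ?thesis
    proof (rule continuous_map_eq[of _ _ "\<lambda>x. 0"])
      fix x assume "x \<in> topspace (subtopology wtop (K n))"
      then show "0 = Fc K g n x i j" using False unfolding Fc_def by auto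
    qed simp
  qed
qed

lemma Fc_ncA:
  assumes K: "nc_convex K" and S: "nc_symmetric K" and g: "g \<in> A1 K"
  shows "Fc K g \<in> ncA K"
  unfolding ncA_def
proof (intro CollectI conjI allI impI ballI)
  show "Fc K g n x = (\<lambda>i j. 0)" if "\<not> (1 \<le> n \<and> x \<in> K n)" for n x using that unfolding Fc_def by auto
  show "is_mat n n (Fc K g n x)" for n x unfolding Fc_def is_mat_def by auto
  show "Fc K g n (dsum I d \<alpha> x) = dsum I d \<alpha> (\<lambda>i. Fc K g (d i) (x i))"
    if "dsum_data n I d \<alpha> \<and> (\<forall>i\<in>I. x i \<in> K (d i))" for n I d \<alpha> x
    using Fc_dsum[OF K S g] that by blast
  show "Fc K g m (conj (mtr \<beta>) n x) = conj (mtr \<beta>) n (Fc K g n x)"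
    if "1 \<le> n \<and> 1 \<le> m \<and> isom n m \<beta> \<and> x \<in> K n" for n m \<beta> x
    using Fc_comp[OF K S g] that by blast
  show "continuous_map (subtopology wtop (K n)) euclidean (Fc K g n)" if "1 \<le> n" for n
    using Fc_cont[OF K S g that] .
qed

lemma Fc_rho:
  assumes K: "nc_convex K" and g: "g \<in> A1 K"
  shows "rho K (Fc K g) = g"
proof
  fix x
  show "rho K (Fc K g) x = g x"
  proof (cases "x \<in> K 1")
    case True
    have "Fc K g 1 x 0 0 = Lc K g (1, x 0 0)" using Fc_in[of 1 x K, OF _ True] by simp
    then show ?thesis using Lpt(2)[OF K g True] True unfolding rho_def by simp
  next
    case False
    then show ?thesis using g unfolding rho_def A1_def by auto
  qed
qed


lemma psd_e0: "psd n A \<Longrightarrow> 1 \<le> n \<Longrightarrow> 0 \<le> A 0 0"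
proof -
  assume p: "psd n A" and n: "1 \<le> n"
  have "0 \<le> (\<Sum>i<n. \<Sum>j<n. ev 0 i * A i j * ev 0 j)" using p unfolding psd_def by blast
  also have "\<dots> = A 0 0" using sum_ev_real[of 0 n 0 A] n by (simp add: mult_ac)
  finally show ?thesis .
qed

lemma rho_A1:
  assumes K: "nc_convex K" and f: "f \<in> ncA K"
  shows "rho K f \<in> A1 K"
  unfolding A1_def
proof (intro CollectI conjI allI impI ballI)
  show "rho K f x = 0" if "x \<notin> K 1" for x using that unfolding rho_def by simp
  show "continuous_map (subtopology wtop (K 1)) euclidean (rho K f)"
  proof (rule continuous_map_eq)
    show "continuous_map (subtopology wtop (K 1)) euclidean (\<lambda>x. f 1 x 0 0)"
      using fA_cont[OF f, of 1] cont_rmat_iff by blast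
    show "f 1 x 0 0 = rho K f x" if "x \<in> topspace (subtopology wtop (K 1))" for x
      using that unfolding rho_def by simp
  qed
  show "rho K f (ccomb t x y) = t * rho K f x + (1 - t) * rho K f y"
    if "x \<in> K 1" "y \<in> K 1" "t \<in> {0..1}" for x y t
  proof -
    have c: "ccomb t x y \<in> K 1" using Kccomb[OF K _ that(1,2)] that(3) by auto
    have "f 1 (ccomb t x y) = ccomb t (f 1 x) (f 1 y)" using fccomb[OF K f _ that(1,2)] that(3) by auto
    then show ?thesis using c that unfolding rho_def ccomb_def by simp
  qed
qed

lemma fsym_entry:
  assumes K: "nc_convex K" and f: "f \<in> ncA K" and n: "1 \<le> n" and x: "x \<in> K n" and ij: "i < n" "j < n" "i \<noteq> j"
  shows "f 1 (cmp n (uv i j) x) 0 0 = (f n x i i + f n x j j) / 2 + (f n x i j + f n x j i) / 2"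
proof -
  have b: "isom n 1 (col n (uv i j))" by (rule col_isom[OF uv_norm[OF ij]])
  have "f 1 (cmp n (uv i j) x) = cmp n (uv i j) (f n x)"
    unfolding cmp_def by (rule fA_comp[OF f n _ b x]) simp
  then show ?thesis using sum_ev_pair[OF ij(1,2), of "f n x"] by (simp add: cmp00 algebra_simps add_divide_distrib)
qed

lemma fdiag_entry:
  assumes K: "nc_convex K" and f: "f \<in> ncA K" and n: "1 \<le> n" and x: "x \<in> K n" and i: "i < n"
  shows "f 1 (cmp n (ev i) x) 0 0 = f n x i i" "cmp n (ev i) x \<in> K 1"
proof -
  have b: "isom n 1 (col n (ev i))" by (rule col_isom) (use i in \<open>simp add: ev_orth\<close>)
  have "f 1 (cmp n (ev i) x) = cmp n (ev i) (f n x)"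
    unfolding cmp_def by (rule fA_comp[OF f n _ b x]) simp
  then show "f 1 (cmp n (ev i) x) 0 0 = f n x i i" using i by (simp add: cmp00 sum_ev_real)
  show "cmp n (ev i) x \<in> K 1" unfolding cmp_def by (rule Kcomp[OF K n _ b x]) simp
qed

lemma rho_inj:
  assumes K: "nc_convex K" and S: "nc_symmetric K" and f: "f \<in> ncA K" and h: "h \<in> ncA K"
    and e: "rho K f = rho K h"
  shows "f = h"
proof (intro ext)
  fix n x i j
  show "f n x i j = h n x i j"
  proof (cases "1 \<le> n \<and> x \<in> K n")
    case False then show ?thesis using fA_off[OF f False] fA_off[OF h False] by simp
  next
    case True
    then have n: "1 \<le> n" and x: "x \<in> K n" by auto
    have e1: "f 1 y 0 0 = h 1 y 0 0" if "y \<in> K 1" for y using e that unfolding rho_def by metis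
    have dg: "f n x i i = h n x i i" if "i < n" for i
      using fdiag_entry[OF K f n x that] fdiag_entry[OF K h n x that] e1 by metis
    show ?thesis
    proof (cases "i < n \<and> j < n")
      case False then show ?thesis using fA_mat[OF f n x] fA_mat[OF h n x] unfolding is_mat_def by (metis not_less)
    next
      case True
      show ?thesis
      proof (cases "i = j")
        case True then show ?thesis using dg \<open>i < n \<and> j < n\<close> by simp
      next
        case False
        have q: "cmp n (uv i j) x \<in> K 1" using cmp_K[OF K n x uv_norm] True False by auto
        have "f 1 (cmp n (uv i j) x) 0 0 = h 1 (cmp n (uv i j) x) 0 0" using e1[OF q] .
        then have "(f n x i i + f n x j j) / 2 + (f n x i j + f n x j i) / 2 = (h n x i i + h n x j j) / 2 + (h n x i j + h n x j i) / 2"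
          using fsym_entry[OF K f n x _ _ False] fsym_entry[OF K h n x _ _ False] True by simp
        then show ?thesis using dg True symn[OF K S f, of n x i j] symn[OF K S h, of n x i j] by simp
      qed
    qed
  qed
qed

lemma norm_bdd1:
  assumes K: "compact_nc_convex K" and f: "f \<in> ncA K"
  shows "\<exists>B. \<forall>y\<in>K 1. \<bar>f 1 y 0 0\<bar> \<le> B"
  using cont_bound[of "K 1" "f 1"] K fA_cont[OF f, of 1] unfolding compact_nc_convex_def by auto

lemma norm_bdd2:
  assumes K: "compact_nc_convex K" and f: "f \<in> ncA K"
  shows "\<exists>B. \<forall>y\<in>K 2. mnorm 2 (f 2 y) \<le> B"
proof -
  have c: "compactin wtop (K 2)" "continuous_map (subtopology wtop (K 2)) euclidean (f 2)"
    using K fA_cont[OF f, of 2] unfolding compact_nc_convex_def by auto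
  have "\<forall>i j. \<exists>B. \<forall>y\<in>K 2. \<bar>f 2 y i j\<bar> \<le> B" using cont_bound[OF c] by blast
  then obtain B where B: "\<And>i j y. y \<in> K 2 \<Longrightarrow> \<bar>f 2 y i j\<bar> \<le> B i j" by metis
  let ?T = "\<Sum>i<2. \<Sum>j<2. B i j"
  have "mnorm 2 (f 2 y) \<le> sqrt (real 2 * ?T\<^sup>2)" if y: "y \<in> K 2" for y
  proof -
    have s: "(\<Sum>i<2. \<Sum>j<2. \<bar>f 2 y i j\<bar>) \<le> ?T" using B[OF y] by (intro sum_mono) auto
    have "0 \<le> (\<Sum>i<2. \<Sum>j<2. \<bar>f 2 y i j\<bar>)" by (intro sum_nonneg) auto
    then have "(\<Sum>i<2. \<Sum>j<2. \<bar>f 2 y i j\<bar>)\<^sup>2 \<le> ?T\<^sup>2" using s by (intro power_mono) auto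
    then have "sqrt (real 2 * (\<Sum>i<2. \<Sum>j<2. \<bar>f 2 y i j\<bar>)\<^sup>2) \<le> sqrt (real 2 * ?T\<^sup>2)" by simp
    then show ?thesis using mnorm_upper[of 2 "f 2 y"] by linarith
  qed
  then show ?thesis by blast
qed


lemma Sup_ins_le: "0 \<le> (N::real) \<Longrightarrow> (\<And>a. a \<in> S \<Longrightarrow> a \<le> N) \<Longrightarrow> Sup (insert 0 S) \<le> N"
  by (rule cSup_least) auto

lemma Sup_ins_ge: "(\<And>a. a \<in> S \<Longrightarrow> a \<le> (N::real)) \<Longrightarrow> b \<in> S \<Longrightarrow> b \<le> Sup (insert 0 S)"
  by (rule cSup_upper) (auto simp: bdd_above_def le_max_iff_disj intro!: exI[of _ "max 0 N"])

lemma Sup_ins_nonneg: "(\<And>a. a \<in> S \<Longrightarrow> a \<le> (N::real)) \<Longrightarrow> 0 \<le> Sup (insert 0 S)"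
  by (rule cSup_upper) (auto simp: bdd_above_def le_max_iff_disj intro!: exI[of _ "max 0 N"])

lemma rho2_A2:
  assumes K: "nc_convex K" and f: "f \<in> ncA K"
  shows "rho2 K f \<in> A2 K"
  unfolding A2_def
proof (intro CollectI conjI allI impI ballI)
  show "rho2 K f x = (\<lambda>i j. 0)" if "x \<notin> K 2" for x using that unfolding rho2_def by simp
  show "is_mat 2 2 (rho2 K f x)" if "x \<in> K 2" for x using that fA_mat[OF f _ that] unfolding rho2_def by simp
  show "continuous_map (subtopology wtop (K 2)) euclidean (rho2 K f)"
  proof (rule continuous_map_eq)
    show "continuous_map (subtopology wtop (K 2)) euclidean (f 2)" using fA_cont[OF f, of 2] by simp
    show "f 2 x = rho2 K f x" if "x \<in> topspace (subtopology wtop (K 2))" for x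
      using that unfolding rho2_def by simp
  qed
  show "rho2 K f (ccomb t x y) = ccomb t (rho2 K f x) (rho2 K f y)"
    if "x \<in> K 2" "y \<in> K 2" "t \<in> {0..1}" for x y t
  proof -
    have c: "ccomb t x y \<in> K 2" using Kccomb[OF K _ that(1,2)] that(3) by auto
    have "f 2 (ccomb t x y) = ccomb t (f 2 x) (f 2 y)" using fccomb[OF K f _ that(1,2)] that(3) by auto
    then show ?thesis using c that unfolding rho2_def by simp
  qed
qed

lemma lev1_via2:
  assumes K: "nc_convex K" and f: "f \<in> ncA K" and y: "y \<in> K 1"
  shows "f 2 (blk 1 y y) 0 0 = f 1 y 0 0" "blk 1 y y \<in> K 2"
proof -
  have "f 2 (blk 1 y y) = blk 1 (f 1 y) (f 1 y)" using fblk[OF f _ y y] by simp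
  then show "f 2 (blk 1 y y) 0 0 = f 1 y 0 0" by (simp add: blk_entry)
  show "blk 1 y y \<in> K 2" using Kblk[OF K _ y y] by simp
qed

lemma offdiag_via2:
  assumes K: "nc_convex K" and f: "f \<in> ncA K" and n: "1 \<le> n" and x: "x \<in> K n" and ij: "i < n" "j < n" "i \<noteq> j"
  shows "conj (mtr (col2 n (ev i) (ev j))) n x \<in> K 2"
    "f 2 (conj (mtr (col2 n (ev i) (ev j))) n x) 0 1 = f n x i j"
    "f 2 (conj (mtr (col2 n (ev i) (ev j))) n x) 1 0 = f n x j i"
proof -
  have b: "isom n 2 (col2 n (ev i) (ev j))"
    using ev_orth[OF ij(1), of i] ev_orth[OF ij(2), of j] ev_orth[OF ij(1), of j] ij(3)
    by (intro col2_isom) auto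
  show "conj (mtr (col2 n (ev i) (ev j))) n x \<in> K 2" by (rule Kcomp[OF K n _ b x]) auto
  have "f 2 (conj (mtr (col2 n (ev i) (ev j))) n x) = conj (mtr (col2 n (ev i) (ev j))) n (f n x)"
    by (rule fA_comp[OF f n _ b x]) auto
  then show "f 2 (conj (mtr (col2 n (ev i) (ev j))) n x) 0 1 = f n x i j"
    "f 2 (conj (mtr (col2 n (ev i) (ev j))) n x) 1 0 = f n x j i"
    using ij by (simp_all add: conj_col2 sum_ev_real)
qed

lemma rho2_inj:
  assumes K: "nc_convex K" and f: "f \<in> ncA K" and h: "h \<in> ncA K" and e: "rho2 K f = rho2 K h"
  shows "f = h"
proof (intro ext)
  fix n x i j
  have e2: "f 2 y = h 2 y" if "y \<in> K 2" for y using fun_cong[OF e, of y] that unfolding rho2_def by simp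
  have e1: "f 1 y 0 0 = h 1 y 0 0" if "y \<in> K 1" for y
  proof -
    have "f 2 (blk 1 y y) = h 2 (blk 1 y y)" by (rule e2[OF lev1_via2(2)[OF K f that]])
    then show ?thesis using lev1_via2(1)[OF K f that] lev1_via2(1)[OF K h that] by simp
  qed
  show "f n x i j = h n x i j"
  proof (cases "1 \<le> n \<and> x \<in> K n")
    case False then show ?thesis using fA_off[OF f False] fA_off[OF h False] by simp
  next
    case True
    then have n: "1 \<le> n" and x: "x \<in> K n" by auto
    show ?thesis
    proof (cases "i < n \<and> j < n")
      case False then show ?thesis using fA_mat[OF f n x] fA_mat[OF h n x] unfolding is_mat_def by (metis not_less)
    next
      case True
      show ?thesis
      proof (cases "i = j")
        case True
        have i: "i < n" using \<open>i < n \<and> j < n\<close> by simp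
        have "f n x i i = h n x i i"
          using fdiag_entry(1)[OF K f n x i] fdiag_entry(1)[OF K h n x i] e1[OF fdiag_entry(2)[OF K f n x i]] by simp
        then show ?thesis using True by simp
      next
        case False
        have ij: "i < n" "j < n" using True by auto
        have "f 2 (conj (mtr (col2 n (ev i) (ev j))) n x) = h 2 (conj (mtr (col2 n (ev i) (ev j))) n x)"
          by (rule e2[OF offdiag_via2(1)[OF K f n x ij False]])
        then show ?thesis using offdiag_via2(2)[OF K f n x ij False] offdiag_via2(2)[OF K h n x ij False] by simp
      qed
    qed
  qed
qed

lemma mtr_dsum: "mtr (dsum I d \<alpha> y) = dsum I d \<alpha> (\<lambda>i. mtr (y i))"
proof (intro ext)
  fix a b
  have "mtr (conj (\<alpha> i) (d i) (y i)) a b = conj (\<alpha> i) (d i) (mtr (y i)) a b" for i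
    by (simp add: mtr_conj)
  then show "mtr (dsum I d \<alpha> y) a b = dsum I d \<alpha> (\<lambda>i. mtr (y i)) a b"
    unfolding dsum_def by (simp add: mtr_def)
qed

lemma adj_ncA:
  assumes f: "f \<in> ncA K"
  shows "ncadj f \<in> ncA K"
  unfolding ncA_def ncadj_def
proof (intro CollectI conjI allI impI ballI)
  show "mtr (f n x) = (\<lambda>i j. 0)" if "\<not> (1 \<le> n \<and> x \<in> K n)" for n x
    using fA_off[OF f that] unfolding mtr_def by simp
  show "is_mat n n (mtr (f n x))" if "1 \<le> n" "x \<in> K n" for n x
    using fA_mat[OF f that] unfolding is_mat_def mtr_def by auto
  show "mtr (f n (dsum I d \<alpha> x)) = dsum I d \<alpha> (\<lambda>i. mtr (f (d i) (x i)))"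
    if "dsum_data n I d \<alpha> \<and> (\<forall>i\<in>I. x i \<in> K (d i))" for n I d \<alpha> x
  proof -
    have "f n (dsum I d \<alpha> x) = dsum I d \<alpha> (\<lambda>i. f (d i) (x i))" using fA_dsum[OF f, of n I d \<alpha> x] that by blast
    then show ?thesis by (simp add: mtr_dsum)
  qed
  show "mtr (f m (conj (mtr \<beta>) n x)) = conj (mtr \<beta>) n (mtr (f n x))"
    if "1 \<le> n \<and> 1 \<le> m \<and> isom n m \<beta> \<and> x \<in> K n" for n m \<beta> x
  proof -
    have "f m (conj (mtr \<beta>) n x) = conj (mtr \<beta>) n (f n x)" using fA_comp[OF f, of n m \<beta> x] that by blast
    then show ?thesis by (simp add: mtr_conj)
  qed
  show "continuous_map (subtopology wtop (K n)) euclidean (\<lambda>x. mtr (f n x))" if "1 \<le> n" for n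
    using fA_cont[OF f that] unfolding cont_rmat_iff mtr_def by blast
qed

lemma pos_back:
  assumes K: "nc_convex K" and f: "f \<in> ncA K"
    and P1: "\<And>y. y \<in> K 1 \<Longrightarrow> 0 \<le> f 1 y 0 0"
    and Sy: "\<And>n x i j. 1 \<le> n \<Longrightarrow> x \<in> K n \<Longrightarrow> i < n \<Longrightarrow> j < n \<Longrightarrow> f n x i j = f n x j i"
  shows "ncpos K f"
  unfolding ncpos_def psd_def
proof (intro allI impI ballI)
  fix n x assume n: "1 \<le> n" and x: "x \<in> K n"
  have "\<forall>i<n. \<forall>j<n. f n x i j = f n x j i" using Sy[OF n x] by blast
  moreover have "0 \<le> (\<Sum>i<n. \<Sum>j<n. v i * f n x i j * v j)" for v :: "nat \<Rightarrow> real"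
  proof -
  obtain y where y: "y \<in> K 1" and yq: "(\<Sum>i<n. \<Sum>j<n. v i * f n x i j * v j) = (\<Sum>k<n. v k * v k) * f 1 y 0 0"
    using quad[OF K f n x] by blast
  show "0 \<le> (\<Sum>i<n. \<Sum>j<n. v i * f n x i j * v j)" unfolding yq
  proof (rule mult_nonneg_nonneg)
    show "0 \<le> (\<Sum>k<n. v k * v k)" by (rule sum_nonneg) simp
  qed (rule P1[OF y])
  qed
  ultimately show "(\<forall>i<n. \<forall>j<n. f n x i j = f n x j i) \<and> (\<forall>v. 0 \<le> (\<Sum>i<n. \<Sum>j<n. v i * f n x i j * v j))" by blast
qed


lemma norm_b:
  assumes KC: "compact_nc_convex K" and f: "f \<in> ncA K"
  shows "ncnorm K f \<le> norm2 K (rho2 K f)" "norm2 K (rho2 K f) \<le> ncnorm K f" "0 \<le> norm2 K (rho2 K f)"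
proof -
  have K: "nc_convex K" using KC unfolding compact_nc_convex_def by simp
  obtain B where B: "\<And>y. y \<in> K 2 \<Longrightarrow> mnorm 2 (f 2 y) \<le> B" using norm_bdd2[OF KC f] by blast
  let ?S2 = "{mnorm 2 (rho2 K f x) | x. x \<in> K 2}"
  have S2b: "a \<le> B" if "a \<in> ?S2" for a using that B unfolding rho2_def by auto
  show N2: "0 \<le> norm2 K (rho2 K f)" unfolding norm2_def by (rule Sup_ins_nonneg[OF S2b])
  have HN: "mnorm 2 (f 2 y) \<le> norm2 K (rho2 K f)" if "y \<in> K 2" for y
  proof -
    have "mnorm 2 (f 2 y) \<in> ?S2" using that unfolding rho2_def by force
    then show ?thesis unfolding norm2_def using Sup_ins_ge[of ?S2 B] S2b by blast
  qed
  have all: "mnorm n (f n x) \<le> norm2 K (rho2 K f)" if "1 \<le> n" "x \<in> K n" for n x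
    by (rule lev2_norm[OF K f that N2 HN])
  let ?S = "{mnorm n (f n x) | n x. 1 \<le> n \<and> x \<in> K n}"
  have Sb: "a \<le> norm2 K (rho2 K f)" if "a \<in> ?S" for a using that all by auto
  show "ncnorm K f \<le> norm2 K (rho2 K f)" unfolding ncnorm_def by (rule Sup_ins_le[OF N2 Sb])
  have N0: "0 \<le> ncnorm K f" unfolding ncnorm_def by (rule Sup_ins_nonneg[OF Sb])
  show "norm2 K (rho2 K f) \<le> ncnorm K f" unfolding norm2_def
  proof (rule Sup_ins_le[OF N0])
    fix a assume "a \<in> ?S2"
    then obtain x where x: "x \<in> K 2" and a: "a = mnorm 2 (f 2 x)" unfolding rho2_def by auto
    have "a \<in> ?S" using x a by force
    then show "a \<le> ncnorm K f" unfolding ncnorm_def using Sup_ins_ge[of ?S "norm2 K (rho2 K f)"] Sb by blast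
  qed
qed

lemma norm_a:
  assumes KC: "compact_nc_convex K" and S: "nc_symmetric K" and f: "f \<in> ncA K"
  shows "ncnorm K f = norm1 K (rho K f)"
proof -
  have K: "nc_convex K" using KC unfolding compact_nc_convex_def by simp
  obtain B where B: "\<And>y. y \<in> K 1 \<Longrightarrow> \<bar>f 1 y 0 0\<bar> \<le> B" using norm_bdd1[OF KC f] by blast
  let ?S1 = "{\<bar>rho K f x\<bar> | x. x \<in> K 1}"
  have S1b: "a \<le> B" if "a \<in> ?S1" for a using that B unfolding rho_def by auto
  have N1: "0 \<le> norm1 K (rho K f)" unfolding norm1_def by (rule Sup_ins_nonneg[OF S1b])
  have HN: "\<bar>f 1 y 0 0\<bar> \<le> norm1 K (rho K f)" if "y \<in> K 1" for y
  proof -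
    have "\<bar>f 1 y 0 0\<bar> \<in> ?S1" using that unfolding rho_def by force
    then show ?thesis unfolding norm1_def using Sup_ins_ge[of ?S1 B] S1b by blast
  qed
  have all: "mnorm n (f n x) \<le> norm1 K (rho K f)" if "1 \<le> n" "x \<in> K n" for n x
    by (rule lev1_norm_sym[OF K S f that N1 HN])
  let ?S = "{mnorm n (f n x) | n x. 1 \<le> n \<and> x \<in> K n}"
  have Sb: "a \<le> norm1 K (rho K f)" if "a \<in> ?S" for a using that all by auto
  have le: "ncnorm K f \<le> norm1 K (rho K f)" unfolding ncnorm_def by (rule Sup_ins_le[OF N1 Sb])
  have N0: "0 \<le> ncnorm K f" unfolding ncnorm_def by (rule Sup_ins_nonneg[OF Sb])
  have ge: "norm1 K (rho K f) \<le> ncnorm K f" unfolding norm1_def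
  proof (rule Sup_ins_le[OF N0])
    fix a assume "a \<in> ?S1"
    then obtain x where x: "x \<in> K 1" and a: "a = \<bar>f 1 x 0 0\<bar>" unfolding rho_def by auto
    have "mnorm 1 (f 1 x) \<in> ?S" using x by force
    then have "mnorm 1 (f 1 x) \<le> ncnorm K f" unfolding ncnorm_def using Sup_ins_ge[of ?S "norm1 K (rho K f)"] Sb by blast
    moreover have "\<bar>f 1 x 0 0\<bar> \<le> mnorm 1 (f 1 x)" by (rule mnorm_e0) simp
    ultimately show "a \<le> ncnorm K f" using a by simp
  qed
  show ?thesis using le ge by simp
qed

lemma pos_a:
  assumes K: "nc_convex K" and S: "nc_symmetric K" and f: "f \<in> ncA K"
  shows "ncpos K f \<longleftrightarrow> (\<forall>x\<in>K 1. 0 \<le> rho K f x)"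
proof
  assume "ncpos K f"
  then show "\<forall>x\<in>K 1. 0 \<le> rho K f x" unfolding ncpos_def rho_def using psd_e0 by fastforce
next
  assume h: "\<forall>x\<in>K 1. 0 \<le> rho K f x"
  show "ncpos K f"
  proof (rule pos_back[OF K f])
    show "0 \<le> f 1 y 0 0" if "y \<in> K 1" for y using h that unfolding rho_def by auto
    show "f n x i j = f n x j i" for n x i j by (rule symn[OF K S f])
  qed
qed

lemma pos_b:
  assumes K: "nc_convex K" and f: "f \<in> ncA K"
  shows "ncpos K f \<longleftrightarrow> (\<forall>x\<in>K 2. psd 2 (rho2 K f x))"
proof
  assume "ncpos K f"
  then show "\<forall>x\<in>K 2. psd 2 (rho2 K f x)" unfolding ncpos_def rho2_def by auto
next
  assume h: "\<forall>x\<in>K 2. psd 2 (rho2 K f x)"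
  have h2: "psd 2 (f 2 x)" if "x \<in> K 2" for x using h that unfolding rho2_def by auto
  show "ncpos K f"
  proof (rule pos_back[OF K f])
    show "0 \<le> f 1 y 0 0" if "y \<in> K 1" for y
      using psd_e0[OF h2[OF lev1_via2(2)[OF K f that]]] lev1_via2(1)[OF K f that] by simp
    show "f n x i j = f n x j i" if "1 \<le> n" "x \<in> K n" "i < n" "j < n" for n x i j
    proof (cases "i = j")
      case False
      have "psd 2 (f 2 (conj (mtr (col2 n (ev i) (ev j))) n x))" by (rule h2[OF offdiag_via2(1)[OF K f that False]])
      then have "f 2 (conj (mtr (col2 n (ev i) (ev j))) n x) 0 1 = f 2 (conj (mtr (col2 n (ev i) (ev j))) n x) 1 0"
        unfolding psd_def by auto
      then show ?thesis using offdiag_via2(2,3)[OF K f that False] by simp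
    qed simp
  qed
qed

theorem theorem6p10:
  fixes K :: "nat \<Rightarrow> ('f::real_normed_vector) emat set"
  shows
  "(compact_nc_convex K \<and> nc_symmetric K \<longrightarrow>
      bij_betw (rho K) (ncA K) (A1 K) \<and>
      (\<forall>f\<in>ncA K. ncnorm K f = norm1 K (rho K f)) \<and>
      (\<forall>f\<in>ncA K. ncpos K f \<longleftrightarrow> (\<forall>x\<in>K 1. 0 \<le> rho K f x)) \<and>
      rho K (ncunit K) = (\<lambda>x. if x \<in> K 1 then 1 else 0))
   \<and>
   (compact_nc_convex K \<longrightarrow>
      (\<forall>f\<in>ncA K. rho2 K f \<in> A2 K) \<and>
      inj_on (rho2 K) (ncA K) \<and>
      (\<forall>f\<in>ncA K. norm2 K (rho2 K f) \<le> ncnorm K f) \<and>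
      (\<forall>f\<in>ncA K. ncadj f \<in> ncA K \<and> rho2 K (ncadj f) = (\<lambda>x. mtr (rho2 K f x))) \<and>
      rho2 K (ncunit K) = (\<lambda>x. if x \<in> K 2 then (\<lambda>i j. if i = j \<and> i < 2 then 1 else 0) else (\<lambda>i j. 0)) \<and>
      (\<forall>f\<in>ncA K. ncpos K f \<longleftrightarrow> (\<forall>x\<in>K 2. psd 2 (rho2 K f x))) \<and>
      (\<forall>f\<in>ncA K. ncnorm K f \<le> 2 * norm2 K (rho2 K f)))"
  apply (intro conjI impI)
  subgoal premises H
  proof -
    have K: "nc_convex K" and S: "nc_symmetric K" using H unfolding compact_nc_convex_def by auto
    show ?thesis unfolding bij_betw_def
    proof (intro conjI)
      show "inj_on (rho K) (ncA K)" by (rule inj_onI) (rule rho_inj[OF K S])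
      show "rho K ` ncA K = A1 K"
      proof
        show "rho K ` ncA K \<subseteq> A1 K" using rho_A1[OF K] by blast
        show "A1 K \<subseteq> rho K ` ncA K"
        proof
          fix g assume g: "g \<in> A1 K"
          show "g \<in> rho K ` ncA K" using Fc_rho[OF K g] Fc_ncA[OF K S g] by (metis image_eqI)
        qed
      qed
    qed
  qed
  subgoal premises H using norm_a H by blast
  subgoal premises H using pos_a H unfolding compact_nc_convex_def by blast
  subgoal by (intro ext) (simp add: rho_def ncunit_def)
  subgoal premises H using rho2_A2 H unfolding compact_nc_convex_def by blast
  subgoal premises H
    by (rule inj_onI) (rule rho2_inj, use H in \<open>auto simp: compact_nc_convex_def\<close>)
  subgoal premises H using norm_b(2) H by blast
  subgoal premises H
  proof
    fix f assume f: "f \<in> ncA K"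
    show "ncadj f \<in> ncA K \<and> rho2 K (ncadj f) = (\<lambda>x. mtr (rho2 K f x))"
      using adj_ncA[OF f] by (auto simp: rho2_def ncadj_def mtr_def)
  qed
  subgoal by (intro ext) (simp add: rho2_def ncunit_def)
  subgoal premises H using pos_b H unfolding compact_nc_convex_def by blast
  subgoal premises H
  proof
    fix f assume f: "f \<in> ncA K"
    have "ncnorm K f \<le> norm2 K (rho2 K f)" by (rule norm_b(1)[OF H f])
    moreover have "0 \<le> norm2 K (rho2 K f)" by (rule norm_b(3)[OF H f])
    ultimately show "ncnorm K f \<le> 2 * norm2 K (rho2 K f)" by simp
  qed
  done


end
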